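(* Consider the discrete-time linear controller $x(t+1)=Fx(t)+Gy(t)$, $u(t)=Hx(t)$, $x(0)=x^{\mathrm{ini}}$, with $F\in\mathbb{Z}^{n\times n}$, $G\in\mathbb{Q}^{n\times p}$, $H\in\mathbb{Q}^{m\times n}$, $x^{\mathrm{ini}}\in\mathbb{Q}^n$ and inputs $y(t)\in\mathbb{Q}^p$ for all $t\ge 0$. Let $\bar F=TFT^{-1}=\mathrm{diag}(C_0,\dots,C_{\kappa-1})$ be the rational canonical form of $F$ with $T\in\mathbb{Q}^{n\times n}$ nonsingular, and let $L,s_1,s_2$ be scale factors with $1/L,1/s_1,1/s_2\in\mathbb{N}$ such that $\bar G:=TG/s_1\in\mathbb{Z}^{n\times p}$, $\bar H:=HT^{-1}/s_2\in\mathbb{Z}^{m\times n}$, $z^{\mathrm{ini}}:=Tx^{\mathrm{ini}}/(Ls_1)\in\mathbb{Z}^n$ and $\bar y(t):=y(t)/L\in\mathbb{Z}^p$ for all $t\ge0$. Let $q$ be a prime, $N$ a power of two, $n$ a power of two with $N/n\in\mathbb{N}$, assume $np\le N$, and let $\tau=2^{\lceil\log_2 m\rceil}$ with $\tau\le N/n$. Define the reformulated controller over $R_q$: $$\tilde z(t+1)=\sum_{i=0}^{\kappa-1}\tilde F_i\cdot\tilde z_{r_i}(t)+X^{-N/n}\cdot\tilde z(t)+\tilde G\cdot\tilde y(t),\qquad \tilde u(t)=\tilde H\cdot \mathrm{Slot}_n(\tilde z(t)),\qquad \tilde z(0)=\mathrm{Pack}(z^{\mathrm{ini}}),$$ where $\tilde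 z_{r_i}(t):=\mathrm{Slot}_1(X^{-r_iN/n}\cdot\tilde z(t))\in\mathbb{Z}_q$, and its output $u'(t):=(Ls_1s_2)\cdot\mathrm{Unpack}(\tilde u(t))$. If $$\sup_{t\ge0}\max\left\{\left\|\frac{Tx(t)}{Ls_1}\right\|,\ \left\|\frac{u(t)}{Ls_1s_2}\right\|\right\}<\frac q2,$$ then $u'(t)=u(t)$ for all $t\ge0$.
   Context: Companion matrix: a $d\times d$ matrix with arbitrary first column, entries $1$ at positions $(i,i+1)$, $i=1,\dots,d-1$, and zeros elsewhere. The rational canonical form of $F$ is the unique matrix $\mathrm{diag}(C_0,\dots,C_{\kappa-1})$ similar to $F$ over $\mathbb{Q}$ with each $C_i$ a companion matrix and $\det(sI-C_i)\mid\det(sI-C_{i+1})$; for integer $F$ it is an integer matrix. $\|\cdot\|$ is the infinity norm (for polynomials, the maximum absolute coefficient). $\mathbb{Z}_q:=\mathbb{Z}\cap[-q/2,q/2)$ and $a \bmod q:=a-\lfloor (a+q/2)/q\rfloor q$ (applied entrywise/coefficientwise). $R_q:=\mathbb{Z}_q[X]/\langle X^N+1\rangle$: polynomials of degree $<N$ with coefficients in $\mathbb{Z}_q$, with addition and multiplication being usual polynomial operations followed by reduction using $X^N=-1$ and coefficientwise $\bmod\ q$; $X^{-k}$ denotes the inverse of $X^k$ in $R_q$ (namely $-X^{N-k}$ for $0<k\le N$). For $a\in\mathbb{Z}^n$, $\mathrm{Pack}(a):=\sum_{i=0}^{n-1}(a_i\bmod q)X^{iN/n}$. For a power of two $\alpha$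 and $\mathrm{a}=\sum_{i=0}^{N-1}\mathrm{a}_iX^i$, $\mathrm{Slot}_\alpha(\mathrm{a}):=\sum_{i=0}^{\alpha-1}\mathrm{a}_{iN/\alpha}X^{iN/\alpha}$ (so $\mathrm{Slot}_1$ gives the constant term). $\mathrm{Unpack}(\mathrm{a}):=[\mathrm{a}_0,\mathrm{a}_{N/(n\tau)},\dots,\mathrm{a}_{(m-1)N/(n\tau)}]^\top\in\mathbb{Z}_q^m$. Let $S\in\mathbb{Z}^{n\times n}$ have entries $S_{i,i+1}=1$ for $i=1,\dots,n-1$, $S_{n,1}=-1$, and zeros elsewhere. Let $r_0=0$ and $r_i$ be the sum of the sizes of $C_0,\dots,C_{i-1}$ (the 0-based column index where block $C_i$ starts), and let $\bar F'_i\in\mathbb{Z}^n$ be the $(r_i+1)$-th column of $\bar F-S$; $\tilde F_i:=\mathrm{Pack}(\bar F'_i)$. With $\bar G=(\bar G_{i,j})$: $\tilde G_i:=\sum_{j=0}^{p-1}\bar G_{i,j}X^{-j}\bmod q$ and $\tilde G:=\sum_{i=0}^{n-1}\tilde G_i\cdot X^{iN/n}$. With $\bar y(t)=[\bar y_0(t),\dots,\bar y_{p-1}(t)]^\top$: $\tilde y(t):=\sum_{j=0}^{p-1}\bar y_j(t)X^j\bmod q$. With $\bar H=(\bar H_{i,j})$: $\tilde H_i:=\sum_{j=0}^{n-1}\bar H_{i,j}X^{-jN/n}\bmod q$ and $\tilde H:=\sum_{i=0}^{m-1}\tilde H_i\cdot X^{iN/(n\tau)}$. Matrix/row/column indices of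 $\bar G,\bar H$ are 0-based. *)

theory Defs
  imports Complex_Main "Jordan_Normal_Form.Char_Poly" "HOL-Library.Extended_Real"
begin

definition companion_mat :: "'a :: zero_neq_one mat \<Rightarrow> nat \<Rightarrow> bool" where
  "companion_mat C d \<longleftrightarrow> C \<in> carrier_mat d d \<and>
     (\<forall>i<d. \<forall>j<d. j \<noteq> 0 \<longrightarrow> C $$ (i, j) = (if j = i + 1 then 1 else 0))"

definition rcf_blocks :: "rat mat \<Rightarrow> rat mat list \<Rightarrow> bool" where
  "rcf_blocks Fb Cs \<longleftrightarrow> Fb = diag_block_mat Cs \<and>
     (\<forall>C\<in>set Cs. 0 < dim_row C \<and> companion_mat C (dim_row C)) \<and>
     (\<forall>i. Suc i < length Cs \<longrightarrow> char_poly (Cs ! i) dvd char_poly (Cs ! Suc i))"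

text \<open>r_i: 0-based start column of block C_i.\<close>
definition block_start :: "rat mat list \<Rightarrow> nat \<Rightarrow> nat" where
  "block_start Cs i = sum_list (map dim_row (take i Cs))"

definition S_mat :: "nat \<Rightarrow> rat mat" where
  "S_mat n = mat n n (\<lambda>(i, j). if Suc i < n \<and> j = Suc i then 1
                               else if i = n - 1 \<and> j = 0 then -1 else 0)"

definition vnorm_inf :: "rat vec \<Rightarrow> rat" where
  "vnorm_inf v = Max (insert 0 {\<bar>v $ i\<bar> | i. i < dim_vec v})"

definition cmod :: "int \<Rightarrow> int \<Rightarrow> int" where
  "cmod q a = a - \<lfloor>(rat_of_int a + rat_of_int q / 2) / rat_of_int q\<rfloor> * q"

text \<open>Elements of R_q are coefficient functions (coefficient of X^i), zero for i \<ge> N.\<close>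
type_synonym rq = "nat \<Rightarrow> int"

definition radd :: "nat \<Rightarrow> int \<Rightarrow> rq \<Rightarrow> rq \<Rightarrow> rq" where
  "radd N q a b = (\<lambda>k. if k < N then cmod q (a k + b k) else 0)"

text \<open>Multiplication: usual product, reduction with X^N = -1, then coefficientwise mod q.\<close>
definition rmul :: "nat \<Rightarrow> int \<Rightarrow> rq \<Rightarrow> rq \<Rightarrow> rq" where
  "rmul N q a b = (\<lambda>k. if k < N then cmod q
      (\<Sum>i<N. \<Sum>j<N. if i + j = k then a i * b j
                      else if i + j = k + N then - (a i * b j) else 0) else 0)"

definition rsum :: "nat \<Rightarrow> int \<Rightarrow> (nat \<Rightarrow> rq) \<Rightarrow> nat set \<Rightarrow> rq" where
  "rsum N q f I = (\<lambda>k. if k < N then cmod q (\<Sum>i\<in>I. f i k) else 0)"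

definition rconst :: "nat \<Rightarrow> int \<Rightarrow> int \<Rightarrow> rq" where
  "rconst N q c = (\<lambda>k. if k = 0 \<and> 0 < N then cmod q c else 0)"

text \<open>X^j in R_q for any integer j (so X^{-k} is the inverse of X^k); uses X^N = -1.\<close>
definition Xpow :: "nat \<Rightarrow> int \<Rightarrow> int \<Rightarrow> rq" where
  "Xpow N q j = (\<lambda>k. if k = nat (j mod int N)
                     then cmod q (if even (j div int N) then 1 else -1) else 0)"

definition Pack :: "nat \<Rightarrow> nat \<Rightarrow> int \<Rightarrow> int vec \<Rightarrow> rq" where
  "Pack N n q a = rsum N q (\<lambda>i. rmul N q (rconst N q (a $ i)) (Xpow N q (int (i * N div n)))) {..<n}"

definition Slot :: "nat \<Rightarrow> nat \<Rightarrow> rq \<Rightarrow> rq" where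
  "Slot N \<alpha> a = (\<lambda>k. if k < N \<and> (\<exists>i<\<alpha>. k = i * N div \<alpha>) then a k else 0)"

definition Unpack :: "nat \<Rightarrow> nat \<Rightarrow> nat \<Rightarrow> nat \<Rightarrow> rq \<Rightarrow> int vec" where
  "Unpack N n \<tau> m a = vec m (\<lambda>i. a (i * N div (n * \<tau>)))"

end

theory Submission
  imports Defs
begin

definition w3 :: "nat \<Rightarrow> nat \<Rightarrow> nat \<Rightarrow> nat \<Rightarrow> int" where
  "w3 N i j k = (if i + j = k then 1 else if i + j = k + N then -1 else 0)"

definition nm :: "nat \<Rightarrow> rq \<Rightarrow> rq \<Rightarrow> nat \<Rightarrow> int" where
  "nm N a b k = (\<Sum>i<N. \<Sum>j<N. a i * b j * w3 N i j k)"

definition xmono :: "nat \<Rightarrow> int \<Rightarrow> nat \<Rightarrow> int" where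
  "xmono N e = (\<lambda>k. if k = nat (e mod int N) then (if even (e div int N) then 1 else -1) else 0)"

definition eqv :: "nat \<Rightarrow> int \<Rightarrow> rq \<Rightarrow> rq \<Rightarrow> bool" where
  "eqv N q a b \<longleftrightarrow> (\<forall>k<N. a k mod q = b k mod q)"

definition lc :: "nat \<Rightarrow> 'a set \<Rightarrow> ('a \<Rightarrow> int) \<Rightarrow> ('a \<Rightarrow> int) \<Rightarrow> nat \<Rightarrow> int" where
  "lc N I c e = (\<lambda>k. \<Sum>x\<in>I. c x * xmono N (e x) k)"

lemma rmul_nm: "rmul N q a b = (\<lambda>k. if k < N then cmod q (nm N a b k) else 0)"
proof -
  have "\<And>k. (\<Sum>i<N. \<Sum>j<N. if i + j = k then a i * b j
                      else if i + j = k + N then - (a i * b j) else 0) = nm N a b k"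
    unfolding nm_def w3_def by (intro sum.cong refl) auto
  then show ?thesis unfolding rmul_def by presburger
qed

lemma cmod_mod: "cmod q a mod q = a mod q"
proof -
  show ?thesis unfolding cmod_def
    by (metis mod_mult_self1 diff_conv_add_uminus mult_minus_left)
qed

lemma cmod_small:
  assumes "0 < q" "- q \<le> 2 * a" "2 * a < q"
  shows "cmod q a = a"
proof -
  have q: "rat_of_int q > 0" using assms by simp
  have "0 \<le> (rat_of_int a + rat_of_int q / 2) / rat_of_int q"
  proof -
    have "- rat_of_int q \<le> 2 * rat_of_int a" using assms(2)
      by (metis of_int_le_iff of_int_mult of_int_numeral of_int_minus)
    then show ?thesis using q by (intro divide_nonneg_pos) linarith+
  qed
  moreover have "(rat_of_int a + rat_of_int q / 2) / rat_of_int q < 1"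
  proof -
    have "2 * rat_of_int a < rat_of_int q" using assms(3)
      by (metis of_int_less_iff of_int_mult of_int_numeral)
    then show ?thesis using q by (simp add: divide_less_eq)
  qed
  ultimately have "\<lfloor>(rat_of_int a + rat_of_int q / 2) / rat_of_int q\<rfloor> = 0"
    by (simp add: floor_eq_iff)
  then show ?thesis unfolding cmod_def by simp
qed

lemma sum_mod_cong:
  assumes "\<And>x. x \<in> A \<Longrightarrow> f x mod (q::int) = g x mod q"
  shows "sum f A mod q = sum g A mod q"
proof -
  have "sum f A mod q = (\<Sum>x\<in>A. f x mod q) mod q" by (simp add: mod_sum_eq)
  also have "\<dots> = (\<Sum>x\<in>A. g x mod q) mod q" using assms by (simp cong: sum.cong)
  also have "\<dots> = sum g A mod q" by (simp add: mod_sum_eq)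
  finally show ?thesis .
qed

lemma nm_cong:
  assumes "eqv N q a a'" "eqv N q b b'"
  shows "nm N a b k mod q = nm N a' b' k mod q"
  unfolding nm_def
proof (intro sum_mod_cong)
  fix i j assume i: "i \<in> {..<N}" and j: "j \<in> {..<N}"
  have "a i mod q = a' i mod q" "b j mod q = b' j mod q"
    using assms i j unfolding eqv_def by auto
  then show "a i * b j * w3 N i j k mod q = a' i * b' j * w3 N i j k mod q"
    by (metis mod_mult_cong)
qed

lemma eqv_refl[simp]: "eqv N q a a" unfolding eqv_def by simp
lemma eqv_sym: "eqv N q a b \<Longrightarrow> eqv N q b a" unfolding eqv_def by simp
lemma eqv_trans: "eqv N q a b \<Longrightarrow> eqv N q b c \<Longrightarrow> eqv N q a c" unfolding eqv_def by simp

lemma rmul_eqv: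
  assumes "eqv N q a a'" "eqv N q b b'"
  shows "eqv N q (rmul N q a b) (nm N a' b')"
  unfolding eqv_def rmul_nm using nm_cong[OF assms] by (simp add: cmod_mod)

lemma radd_eqv:
  assumes "eqv N q a a'" "eqv N q b b'"
  shows "eqv N q (radd N q a b) (\<lambda>k. a' k + b' k)"
  using assms unfolding eqv_def radd_def by (auto simp: cmod_mod intro: mod_add_cong)

lemma rsum_eqv:
  assumes "\<And>x. x \<in> I \<Longrightarrow> eqv N q (f x) (g x)"
  shows "eqv N q (rsum N q f I) (\<lambda>k. \<Sum>x\<in>I. g x k)"
  using assms unfolding eqv_def rsum_def by (auto simp: cmod_mod intro!: sum_mod_cong)

lemma rconst_eqv: "eqv N q (rconst N q c) (\<lambda>k. c * xmono N 0 k)"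
  unfolding eqv_def rconst_def xmono_def by (auto simp: cmod_mod)

lemma Xpow_eqv: "eqv N q (Xpow N q e) (xmono N e)"
  unfolding eqv_def Xpow_def xmono_def by (auto simp: cmod_mod)

lemma nm_sum_left: "nm N (\<lambda>k. \<Sum>x\<in>I. f x k) b k = (\<Sum>x\<in>I. nm N (f x) b k)"
  unfolding nm_def by (simp add: sum_distrib_right sum_distrib_left mult.assoc sum.swap[of _ I])

lemma nm_sum_right: "nm N a (\<lambda>k. \<Sum>x\<in>I. f x k) k = (\<Sum>x\<in>I. nm N a (f x) k)"
  unfolding nm_def by (simp add: sum_distrib_right sum_distrib_left mult.assoc sum.swap[of _ I])

lemma nm_smult_left: "nm N (\<lambda>k. c * a k) b k = c * nm N a b k"
  unfolding nm_def by (simp add: sum_distrib_left mult.assoc)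

lemma nm_smult_right: "nm N a (\<lambda>k. c * b k) k = c * nm N a b k"
  unfolding nm_def by (simp add: sum_distrib_left algebra_simps)

lemma mono_at: "xmono N e k = (if k = nat (e mod int N) then (if even (e div int N) then 1 else -1) else 0)"
  unfolding xmono_def by simp

lemma nm_mono_left:
  assumes N: "0 < N" and k: "k < N"
  shows "nm N (xmono N e) b k =
    (let s = nat (e mod int N); \<sigma> = (if even (e div int N) then 1 else -1 :: int) in
     if s \<le> k then \<sigma> * b (k - s) else - \<sigma> * b (k + N - s))"
proof -
  define s where "s = nat (e mod int N)"
  define \<sigma> where "\<sigma> = (if even (e div int N) then 1 else -1 :: int)"
  have sN: "s < N" unfolding s_def using N by (simp add: nat_less_iff)
  have "nm N (xmono N e) b k = (\<Sum>i<N. if i = s then \<sigma> * (\<Sum>j<N. b j * w3 N i j k) else 0)"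
    unfolding nm_def xmono_def s_def \<sigma>_def
    by (intro sum.cong refl) (auto simp: sum_distrib_left mult.assoc)
  also have "\<dots> = \<sigma> * (\<Sum>j<N. b j * w3 N s j k)" using sN by simp
  also have "(\<Sum>j<N. b j * w3 N s j k) = (if s \<le> k then b (k - s) else - b (k + N - s))"
  proof (cases "s \<le> k")
    case True
    have "(\<Sum>j<N. b j * w3 N s j k) = (\<Sum>j<N. if j = k - s then b (k - s) else 0)"
      using True by (intro sum.cong refl) (auto simp: w3_def)
    also have "\<dots> = b (k - s)" using k by simp
    finally show ?thesis using True by simp
  next
    case False
    have "(\<Sum>j<N. b j * w3 N s j k) = (\<Sum>j<N. if j = k + N - s then - b (k + N - s) else 0)"
      using False sN by (intro sum.cong refl) (auto simp: w3_def)
    also have "\<dots> = - b (k + N - s)" using False sN by simp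
    finally show ?thesis using False by simp
  qed
  finally show ?thesis unfolding Let_def s_def \<sigma>_def by simp
qed

lemma divmod_split:
  assumes "0 < N" "x = d * int N + r" "0 \<le> r" "r < int N"
  shows "x div int N = d" "x mod int N = r"
  using assms by (auto simp: div_pos_pos_trivial mod_pos_pos_trivial)

lemma nm_mono_mono:
  assumes N: "0 < N" and k: "k < N"
  shows "nm N (xmono N e) (xmono N f) k = xmono N (e + f) k"
proof -
  define s where "s = e mod int N"
  define t where "t = f mod int N"
  define ed where "ed = e div int N"
  define fd where "fd = f div int N"
  have s: "0 \<le> s" "s < int N" and t: "0 \<le> t" "t < int N" using N unfolding s_def t_def by auto
  have e: "e = ed * int N + s" and f: "f = fd * int N + t" unfolding s_def ed_def t_def fd_def by simp_all
  show ?thesis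
  proof (cases "s + t < int N")
    case True
    have ef: "(e + f) div int N = ed + fd" "(e + f) mod int N = s + t"
      using divmod_split[OF N, of "e + f" "ed + fd" "s + t"] True s t e f by (auto simp: algebra_simps)
    show ?thesis unfolding nm_mono_left[OF N k] Let_def mono_at ef
      unfolding s_def[symmetric] t_def[symmetric] ed_def[symmetric] fd_def[symmetric]
      using True s t k by (auto simp: nat_add_distrib)
  next
    case False
    have ef: "(e + f) div int N = ed + fd + 1" "(e + f) mod int N = s + t - int N"
      using divmod_split[OF N, of "e + f" "ed + fd + 1" "s + t - int N"] False s t e f by (auto simp: algebra_simps)
    show ?thesis unfolding nm_mono_left[OF N k] Let_def mono_at ef
      unfolding s_def[symmetric] t_def[symmetric] ed_def[symmetric] fd_def[symmetric]
      using False s t k by auto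
  qed
qed

lemma lc_mul:
  assumes N: "0 < N" and k: "k < N"
  shows "nm N (lc N I c e) (lc N J d f) k = (\<Sum>x\<in>I. \<Sum>y\<in>J. c x * d y * xmono N (e x + f y) k)"
  unfolding lc_def nm_sum_left nm_smult_left nm_sum_right nm_smult_right nm_mono_mono[OF N k]
  by (simp add: sum_distrib_left mult.assoc)

lemma small_mult_zero:
  assumes "(0::int) < D" "\<bar>x * D\<bar> < D"
  shows "x = 0"
proof (rule ccontr)
  assume "x \<noteq> 0"
  then have "1 \<le> \<bar>x\<bar>" by simp
  then have "1 * D \<le> \<bar>x\<bar> * D" using assms(1) by (intro mult_right_mono) auto
  then show False using assms by (simp add: abs_mult)
qed

lemma mono_self:
  assumes "0 \<le> m" "m < int N"
  shows "xmono N m (nat m) = 1"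
proof -
  have "m mod int N = m" "m div int N = 0" using assms by (auto simp: mod_pos_pos_trivial div_pos_pos_trivial)
  then show ?thesis unfolding mono_at by simp
qed

lemma mono_pos_G:
  assumes N: "N = n * D" and D: "0 < D" and i: "i < n" and l: "l < n" and j: "j < D" and j': "j' < D"
  shows "xmono N (int (i * D) + (int j' - int j)) (l * D) = (if i = l \<and> j = j' then 1 else 0)"
proof (cases "i = l \<and> j = j'")
  case True
  have "l * D < N" using N l D by simp
  then have "xmono N (int (l * D)) (l * D) = 1"
    by (metis mono_self nat_int of_nat_0_le_iff of_nat_less_iff)
  then show ?thesis using True by simp
next
  case False
  define m where "m = int (i * D) + (int j' - int j)"
  have "xmono N m (l * D) = 0"
  proof (rule ccontr)
    assume "xmono N m (l * D) \<noteq> 0"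
    then have "l * D = nat (m mod int N)" unfolding mono_at by (auto split: if_splits)
    moreover have "0 \<le> m mod int N" using N D l by simp
    ultimately have mm: "m mod int N = int (l * D)" by linarith
    define c where "c = m div int N"
    have "m = c * int N + m mod int N" unfolding c_def by simp
    then have "m = c * int N + int (l * D)" using mm by simp
    then have eq: "(int i - int l - c * int n) * int D = int j - int j'"
      unfolding m_def N by (simp add: algebra_simps)
    have "\<bar>(int i - int l - c * int n) * int D\<bar> < int D" unfolding eq using j j' by linarith
    then have x0: "int i - int l - c * int n = 0" using small_mult_zero[of "int D" "int i - int l - c * int n"] D by linarith
    with eq have "j = j'" by simp
    have "\<bar>c * int n\<bar> < int n" using x0 i l by linarith
    then have "c = 0" using small_mult_zero[of "int n"] i by (auto simp: mult.commute)
    with x0 have "i = l" by simp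
    with \<open>j = j'\<close> False show False by simp
  qed
  then show ?thesis using False unfolding m_def by simp
qed

lemma mono_pos_H:
  assumes N: "N = n * D" and D: "D = \<tau> * E" and E: "0 < E" and i: "i < \<tau>" and l: "l < \<tau>"
    and j: "j < n" and j': "j' < n"
  shows "xmono N (int (i * E) + (int (j' * D) - int (j * D))) (l * E) = (if i = l \<and> j = j' then 1 else 0)"
proof (cases "i = l \<and> j = j'")
  case True
  have "l * E < \<tau> * E" using l E by simp
  also have "\<dots> \<le> n * (\<tau> * E)" using j by simp
  finally have "l * E < N" using N D by simp
  then have "xmono N (int (l * E)) (l * E) = 1"
    by (metis mono_self nat_int of_nat_0_le_iff of_nat_less_iff)
  then show ?thesis using True by simp
next
  case False
  define m where "m = int (i * E) + (int (j' * D) - int (j * D))"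
  have "xmono N m (l * E) = 0"
  proof (rule ccontr)
    assume "xmono N m (l * E) \<noteq> 0"
    then have "l * E = nat (m mod int N)" unfolding mono_at by (auto split: if_splits)
    moreover have "0 \<le> m mod int N" using N D j E i by simp
    ultimately have mm: "m mod int N = int (l * E)" by linarith
    define c where "c = m div int N"
    have "m = c * int N + m mod int N" unfolding c_def by simp
    then have "m = c * int N + int (l * E)" using mm by simp
    then have eq0: "((int j - int j' + c * int n) * int \<tau>) * int E = (int i - int l) * int E"
      unfolding m_def N D by (simp add: algebra_simps)
    then have eq: "(int j - int j' + c * int n) * int \<tau> = int i - int l" using E by simp
    have "\<bar>(int j - int j' + c * int n) * int \<tau>\<bar> < int \<tau>" using eq i l by linarith
    then have x1: "int j - int j' + c * int n = 0" using small_mult_zero[of "int \<tau>"] i by auto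
    with eq have "i = l" by simp
    have "\<bar>c * int n\<bar> < int n" using x1 j j' by linarith
    then have "c = 0" using small_mult_zero[of "int n"] j by (auto simp: mult.commute)
    with x1 have "j = j'" by simp
    with \<open>i = l\<close> False show False by simp
  qed
  then show ?thesis using False unfolding m_def by simp
qed

lemma rat_poly_denom:
  fixes p :: "rat poly"
  shows "\<exists>(a::int) P. a > 0 \<and> map_poly of_int P = Polynomial.smult (of_int a) p"
proof -
  define a where "a = (\<Prod>i\<le>degree p. snd (quotient_of (coeff p i)))"
  have a0: "a > 0" unfolding a_def by (intro prod_pos) (simp add: quotient_of_denom_pos')
  have int: "of_int a * coeff p i \<in> \<int>" for i
  proof (cases "i \<le> degree p")
    case True
    obtain x y where xy: "quotient_of (coeff p i) = (x, y)" by force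
    have "coeff p i = of_int x / of_int y" using xy by (simp add: quotient_of_div)
    have y0: "y > 0" using xy quotient_of_denom_pos by blast
    have "a = y * (\<Prod>j\<in>{..degree p} - {i}. snd (quotient_of (coeff p j)))"
      unfolding a_def using True xy by (subst prod.remove[of _ i]) auto
    then have "of_int a * coeff p i = of_int (x * (\<Prod>j\<in>{..degree p} - {i}. snd (quotient_of (coeff p j))))"
      using \<open>coeff p i = of_int x / of_int y\<close> y0 by simp
    then show ?thesis by (metis Ints_of_int)
  next
    case False
    then show ?thesis by (simp add: coeff_eq_0)
  qed
  define P where "P = map_poly (\<lambda>x. \<lfloor>x\<rfloor>) (Polynomial.smult (of_int a) p)"
  have "map_poly of_int P = Polynomial.smult (of_int a) p"
  proof (rule poly_eqI)
    fix i
    show "coeff (map_poly of_int P) i = coeff (Polynomial.smult (of_int a) p) i"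
      unfolding P_def using int[of i] by (simp add: coeff_map_poly)
  qed
  with a0 show ?thesis by blast
qed

lemma gauss_monic:
  fixes p :: "rat poly" and f :: "int poly"
  assumes p: "monic p" and f: "monic f" and dvd: "p dvd map_poly of_int f"
  shows "coeff p i \<in> \<int>"
proof -
  obtain g where fg: "map_poly of_int f = p * g" using dvd by (elim dvdE)
  have "lead_coeff (map_poly of_int f :: rat poly) = 1" using f by simp
  then have g: "monic g" using p unfolding fg by (simp add: lead_coeff_mult)
  obtain a P where a: "a > 0" and P: "map_poly of_int P = Polynomial.smult (of_int a) p" using rat_poly_denom by blast
  obtain b G where b: "b > 0" and G: "map_poly of_int G = Polynomial.smult (of_int b) g" using rat_poly_denom by blast
  have sm: "map_poly of_int (Polynomial.smult (a*b) f) = Polynomial.smult (of_int (a*b)) (map_poly of_int f :: rat poly)"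
    by (rule poly_eqI) (simp add: coeff_map_poly)
  have "map_poly of_int (P * G) = (map_poly of_int (Polynomial.smult (a * b) f) :: rat poly)"
    unfolding sm by (simp add: of_int_poly_hom.hom_mult P G fg mult.commute mult.left_commute)
  then have PG: "P * G = Polynomial.smult (a * b) f" by (rule of_int_poly_hom.injectivity)
  have cf: "content f = 1"
  proof -
    have "content f dvd 1" using f content_dvd_coeff[of f "degree f"] by simp
    moreover have "content f \<ge> 0" by (metis normalize_content abs_ge_zero normalize_int_def)
    ultimately show ?thesis by simp
  qed
  have cPG: "content P * content G = a * b"
    using arg_cong[OF PG, of content] a b by (simp add: content_mult content_smult cf)
  have "of_int (coeff P (degree p)) = (of_int a :: rat)"
    using arg_cong[OF P, of "\<lambda>x. coeff x (degree p)"] p by (simp add: coeff_map_poly)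
  then have "coeff P (degree p) = a" by simp
  then have da: "content P dvd a" by (metis content_dvd_coeff)
  have "of_int (coeff G (degree g)) = (of_int b :: rat)"
    using arg_cong[OF G, of "\<lambda>x. coeff x (degree g)"] g by (simp add: coeff_map_poly)
  then have "coeff G (degree g) = b" by simp
  then have db: "content G dvd b" by (metis content_dvd_coeff)
  have cP0: "content P \<ge> 0" by (metis normalize_content abs_ge_zero normalize_int_def)
  have cG0: "content G \<ge> 0" by (metis normalize_content abs_ge_zero normalize_int_def)
  have "content P \<le> a" using da a by (simp add: zdvd_imp_le)
  moreover have "content G \<le> b" using db b by (simp add: zdvd_imp_le)
  moreover have "\<not> content P < a"
  proof
    assume lt: "content P < a"
    have "content P * content G \<le> content P * b" using \<open>content G \<le> b\<close> cP0 by (rule mult_left_mono)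
    also have "\<dots> < a * b" using lt b by (rule mult_strict_right_mono)
    finally show False using cPG by simp
  qed
  ultimately have cPa: "content P = a" by simp
  have "a dvd coeff P i" using content_dvd_coeff[of P i] unfolding cPa .
  then obtain k where k: "coeff P i = a * k" by (elim dvdE)
  have "of_int (coeff P i) = (of_int a * coeff p i :: rat)"
    using arg_cong[OF P, of "\<lambda>x. coeff x i"] by (simp add: coeff_map_poly)
  then have "coeff p i = of_int k" using a unfolding k by simp
  then show ?thesis by simp
qed

lemma det_comp:
  fixes M :: "'a::comm_ring_1 mat"
  assumes "M \<in> carrier_mat (Suc d) (Suc d)"
    and "\<And>i j. i < Suc d \<Longrightarrow> j < Suc d \<Longrightarrow> j \<noteq> 0 \<Longrightarrow>
           M $$ (i,j) = (if i = j then s else if j = i + 1 then -1 else 0)"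
  shows "det M = (\<Sum>i\<le>d. M $$ (i,0) * s ^ (d - i))"
  using assms
proof (induction d arbitrary: M)
  case 0
  have "det M = (\<Sum>j<1. M $$ (0,j) * cofactor M 0 j)"
    by (rule laplace_expansion_row) (use 0 in auto)
  also have "\<dots> = M $$ (0,0) * cofactor M 0 0" by simp
  also have "cofactor M 0 0 = 1" unfolding cofactor_def
    using 0 by (simp add: det_def mat_delete_def)
  finally show ?case by simp
next
  case (Suc d)
  let ?n = "Suc (Suc d)"
  have M: "M \<in> carrier_mat ?n ?n" using Suc.prems by simp
  have "det M = (\<Sum>j<?n. M $$ (Suc d,j) * cofactor M (Suc d) j)"
    by (rule laplace_expansion_row[OF M]) simp
  also have "\<dots> = M $$ (Suc d, 0) * cofactor M (Suc d) 0 + (M $$ (Suc d, Suc d) * cofactor M (Suc d) (Suc d)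
     + (\<Sum>j<d. M $$ (Suc d, Suc j) * cofactor M (Suc d) (Suc j)))"
  proof -
    define g where "g = (\<lambda>j. M $$ (Suc d,j) * cofactor M (Suc d) j)"
    have "(\<Sum>j<?n. g j) = g 0 + (\<Sum>j<Suc d. g (Suc j))" by (rule sum.lessThan_Suc_shift)
    also have "(\<Sum>j<Suc d. g (Suc j)) = (\<Sum>j<d. g (Suc j)) + g (Suc d)" by (rule sum.lessThan_Suc)
    finally show ?thesis unfolding g_def by (simp add: algebra_simps)
  qed
  also have "(\<Sum>j<d. M $$ (Suc d, Suc j) * cofactor M (Suc d) (Suc j)) = 0"
    by (intro sum.neutral) (auto simp: Suc.prems)
  also have "M $$ (Suc d, Suc d) = s" using Suc.prems by simp
  also have "cofactor M (Suc d) (Suc d) = (\<Sum>i\<le>d. M $$ (i,0) * s ^ (d - i))"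
  proof -
    have "det (mat_delete M (Suc d) (Suc d)) = (\<Sum>i\<le>d. mat_delete M (Suc d) (Suc d) $$ (i,0) * s ^ (d - i))"
      by (rule Suc.IH) (use M Suc.prems in \<open>auto simp: mat_delete_def\<close>)
    also have "\<dots> = (\<Sum>i\<le>d. M $$ (i,0) * s ^ (d - i))"
      using M by (intro sum.cong refl) (auto simp: mat_delete_def)
    finally show ?thesis unfolding cofactor_def by simp
  qed
  also have "cofactor M (Suc d) 0 = 1"
  proof -
    let ?A = "mat_delete M (Suc d) 0"
    have A: "?A \<in> carrier_mat (Suc d) (Suc d)" using M by (auto simp: mat_delete_def)
    have Aij: "?A $$ (i,j) = (if i = Suc j then s else if i = j then -1 else 0)" if "i < Suc d" "j < Suc d" for i j
      using that M Suc.prems(2)[of i "Suc j"] by (auto simp: mat_delete_def)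
    have "det ?A = prod_list (diag_mat ?A)"
      by (rule det_lower_triangular[OF _ A]) (simp add: Aij)
    also have "diag_mat ?A = replicate (Suc d) (-1)"
      using A M by (intro nth_equalityI) (simp_all add: diag_mat_def Aij del: replicate_Suc upt_Suc)
    finally have "det ?A = (-1) ^ Suc d" by simp
    then show ?thesis unfolding cofactor_def by simp
  qed
  moreover have "(\<Sum>i\<le>d. s * (M $$ (i, 0) * s ^ (d - i))) = (\<Sum>i\<le>d. M $$ (i, 0) * s ^ (Suc d - i))"
    by (intro sum.cong refl) (simp add: Suc_diff_le)
  ultimately show ?case by (simp add: sum.atMost_Suc sum_distrib_left)
qed

lemma char_poly_companion:
  assumes C: "companion_mat C d" and d: "0 < d" and i: "i < d"
  shows "coeff (char_poly C) (d - 1 - i) = - C $$ (i,0)"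
proof -
  obtain d' where dd: "d = Suc d'" using d by (cases d) auto
  have Cc: "C \<in> carrier_mat d d" using C unfolding companion_mat_def by simp
  have Cj: "C $$ (i,j) = (if j = i + 1 then 1 else 0)" if "i < d" "j < d" "j \<noteq> 0" for i j
    using C that unfolding companion_mat_def by simp
  let ?x = "[:0,1:] :: 'a poly"
  let ?M = "char_poly_matrix C"
  have m1: "[:-1:] = (-1 :: 'a poly)" by (simp add: one_pCons minus_pCons)
  have M: "?M \<in> carrier_mat (Suc d') (Suc d')" using Cc dd by simp
  have Mij: "?M $$ (i,j) = (if i = j then ?x else 0) + [:- C $$ (i,j):]" if "i < d" "j < d" for i j
    using that Cc unfolding char_poly_matrix_def by simp
  have "char_poly C = (\<Sum>i\<le>d'. ?M $$ (i,0) * ?x ^ (d' - i))"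
    unfolding char_poly_def
  proof (rule det_comp[OF M])
    fix i j assume "i < Suc d'" "j < Suc d'" "j \<noteq> 0"
    then show "?M $$ (i,j) = (if i = j then ?x else if j = i + 1 then -1 else 0)"
      using Mij[of i j] Cj[of i j] dd m1 by auto
  qed
  also have "\<dots> = (\<Sum>i\<le>d'. (if i = 0 then ?x else 0) * ?x ^ (d' - i) + monom (- C $$ (i,0)) (d' - i))"
    using dd by (intro sum.cong refl) (simp add: Mij distrib_right monom_altdef smult_conv_map_poly[symmetric] del: pCons_0_as_mult)
  finally have cp: "char_poly C = (\<Sum>i\<le>d'. (if i = 0 then ?x else 0) * ?x ^ (d' - i)) + (\<Sum>i\<le>d'. monom (- C $$ (i,0)) (d' - i))"
    by (simp add: sum.distrib)
  have "(\<Sum>i\<le>d'. (if i = 0 then ?x else 0) * ?x ^ (d' - i)) = ?x ^ Suc d'"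
    by (subst sum.remove[of _ 0]) auto
  also have "\<dots> = monom 1 (Suc d')" by (simp add: monom_altdef)
  finally have cp2: "char_poly C = monom 1 (Suc d') + (\<Sum>i\<le>d'. monom (- C $$ (i,0)) (d' - i))"
    using cp by simp
  have "coeff (char_poly C) (d - 1 - i) = (\<Sum>j\<le>d'. if d' - j = d' - i then - C $$ (j,0) else 0)"
    unfolding cp2 using dd i by (simp add: coeff_sum)
  also have "\<dots> = (\<Sum>j\<le>d'. if j = i then - C $$ (j,0) else 0)"
    using dd i by (intro sum.cong refl) auto
  also have "\<dots> = - C $$ (i,0)" using dd i by simp
  finally show ?thesis .
qed

lemma char_poly_matrix_four_block:
  fixes A B :: "'a::comm_ring_1 mat"
  assumes A: "A \<in> carrier_mat a a" and B: "B \<in> carrier_mat b b"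
  shows "char_poly_matrix (four_block_mat A (0\<^sub>m a b) (0\<^sub>m b a) B) =
    four_block_mat (char_poly_matrix A) (0\<^sub>m a b) (0\<^sub>m b a) (char_poly_matrix B)"
proof (rule eq_matI)
  fix i j assume i: "i < dim_row (four_block_mat (char_poly_matrix A) (0\<^sub>m a b) (0\<^sub>m b a) (char_poly_matrix B))"
    and j: "j < dim_col (four_block_mat (char_poly_matrix A) (0\<^sub>m a b) (0\<^sub>m b a) (char_poly_matrix B))"
  have i': "i < a + b" and j': "j < a + b" using i j char_poly_matrix_closed[OF A] char_poly_matrix_closed[OF B] by auto
  show "char_poly_matrix (four_block_mat A (0\<^sub>m a b) (0\<^sub>m b a) B) $$ (i, j) =
    four_block_mat (char_poly_matrix A) (0\<^sub>m a b) (0\<^sub>m b a) (char_poly_matrix B) $$ (i, j)"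
    using A B i' j' unfolding char_poly_matrix_def
    by (cases "i < a"; cases "j < a") (auto simp add: index_mat_four_block)
qed (use A B in \<open>simp_all add: char_poly_matrix_def\<close>)

lemma char_poly_diag_block:
  fixes As :: "'a::idom mat list"
  assumes "\<And>A. A \<in> set As \<Longrightarrow> dim_col A = dim_row A"
  shows "char_poly (diag_block_mat As) = prod_list (map char_poly As)"
  using assms
proof (induction As)
  case Nil
  have "char_poly_matrix (0\<^sub>m 0 0 :: 'a mat) = 1\<^sub>m 0" by (rule eq_matI) (simp_all add: char_poly_matrix_def)
  then show ?case by (simp add: char_poly_def)
next
  case (Cons A As)
  let ?B = "diag_block_mat As"
  have dA: "dim_col A = dim_row A" using Cons.prems by simp
  have A: "A \<in> carrier_mat (dim_row A) (dim_row A)" using dA unfolding carrier_mat_def by simp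
  have IH: "char_poly ?B = prod_list (map char_poly As)" using Cons.IH Cons.prems by simp
  have "Ball (set As) square_mat" using Cons.prems by simp
  then have "square_mat ?B" by (rule diag_block_mat_square)
  then have sq: "dim_col ?B = dim_row ?B" by simp
  have B: "?B \<in> carrier_mat (dim_row ?B) (dim_row ?B)" using sq unfolding carrier_mat_def by simp
  have "char_poly (diag_block_mat (A # As)) = char_poly (four_block_mat A (0\<^sub>m (dim_row A) (dim_row ?B)) (0\<^sub>m (dim_row ?B) (dim_row A)) ?B)"
    unfolding diag_block_mat.simps Let_def dA sq ..
  also have "\<dots> = det (four_block_mat (char_poly_matrix A) (0\<^sub>m (dim_row A) (dim_row ?B)) (0\<^sub>m (dim_row ?B) (dim_row A)) (char_poly_matrix ?B))"
    unfolding char_poly_def by (subst char_poly_matrix_four_block[OF A B]) (rule refl)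
  also have "\<dots> = char_poly A * char_poly ?B" unfolding char_poly_def
    by (rule det_four_block_mat_upper_right_zero[OF char_poly_matrix_closed[OF A] refl zero_carrier_mat char_poly_matrix_closed[OF B]])
  finally show ?case using IH by simp
qed

lemma block_start_0[simp]: "block_start Cs 0 = 0" unfolding block_start_def by simp

lemma block_start_Cons_Suc[simp]: "block_start (A # As) (Suc i) = dim_row A + block_start As i"
  unfolding block_start_def by simp

lemma block_start_Suc: "i < length Cs \<Longrightarrow> block_start Cs (Suc i) = block_start Cs i + dim_row (Cs ! i)"
  unfolding block_start_def by (simp add: take_Suc_conv_app_nth)

lemma block_start_length: "block_start Cs (length Cs) = sum_list (map dim_row Cs)"
  unfolding block_start_def by simp

lemma block_start_less:
  assumes pos: "\<forall>C\<in>set Cs. 0 < dim_row C" and ij: "i < j" "j \<le> length Cs"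
  shows "block_start Cs i < block_start Cs j"
  using ij
proof (induction j)
  case 0 then show ?case by simp
next
  case (Suc j)
  have "block_start Cs (Suc j) = block_start Cs j + dim_row (Cs ! j)"
    using Suc.prems by (intro block_start_Suc) simp
  moreover have "0 < dim_row (Cs ! j)" using pos Suc.prems by simp
  moreover have "block_start Cs i \<le> block_start Cs j"
    using Suc by (cases "i = j") auto
  ultimately show ?case by simp
qed

lemma block_start_lt_total:
  assumes pos: "\<forall>C\<in>set Cs. 0 < dim_row C" and i: "i < length Cs"
  shows "block_start Cs i < sum_list (map dim_row Cs)"
  using block_start_less[OF pos i] block_start_length[of Cs] by simp

lemma block_start_inj:
  assumes pos: "\<forall>C\<in>set Cs. 0 < dim_row C"
  shows "inj_on (block_start Cs) {..<length Cs}"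
proof (rule inj_onI)
  fix i j assume "i \<in> {..<length Cs}" "j \<in> {..<length Cs}" "block_start Cs i = block_start Cs j"
  then show "i = j" using block_start_less[OF pos, of i j] block_start_less[OF pos, of j i]
    by (metis lessThan_iff less_imp_le_nat linorder_neqE_nat order_less_irrefl)
qed

lemma diag_comp_col:
  assumes "\<forall>C\<in>set Cs. 0 < dim_row C \<and> companion_mat C (dim_row C)"
    and "l < sum_list (map dim_row Cs)" "c < sum_list (map dim_row Cs)"
    and "\<forall>i<length Cs. c \<noteq> block_start Cs i"
  shows "diag_block_mat Cs $$ (l,c) = (if l + 1 = c then 1 else 0)"
  using assms
proof (induction Cs arbitrary: l c)
  case Nil then show ?case by simp
next
  case (Cons A As)
  let ?B = "diag_block_mat As"
  define dA where "dA = dim_row A"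
  have Ac: "A \<in> carrier_mat dA dA" and compA: "companion_mat A dA" and dA0: "0 < dA"
    using Cons.prems(1) unfolding dA_def companion_mat_def by auto
  have sqs: "map dim_col As = map dim_row As"
    using Cons.prems(1) unfolding companion_mat_def by (intro map_cong refl) auto
  have dB: "dim_row ?B = sum_list (map dim_row As)" "dim_col ?B = sum_list (map dim_row As)"
    using dim_diag_block_mat[of As] sqs by auto
  have dAc: "dim_col A = dA" using Ac by simp
  have eq: "diag_block_mat (A # As) = four_block_mat A (0\<^sub>m dA (dim_col ?B)) (0\<^sub>m (dim_row ?B) dA) ?B"
    unfolding dA_def by (simp add: Let_def dAc[unfolded dA_def])
  have l: "l < dA + dim_row ?B" and c: "c < dA + dim_col ?B" using Cons.prems dB unfolding dA_def by auto
  have c0: "c \<noteq> 0" using Cons.prems(4) by (metis block_start_0 length_Cons zero_less_Suc)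
  have idx: "diag_block_mat (A # As) $$ (l,c) =
    (if l < dA then if c < dA then A $$ (l,c) else 0 else if c < dA then 0 else ?B $$ (l - dA, c - dA))"
    unfolding eq using l c Ac by (simp add: index_mat_four_block)
  show ?case
  proof (cases "c < dA")
    case True
    then show ?thesis using compA c0 unfolding idx companion_mat_def by auto
  next
    case False
    show ?thesis
    proof (cases "l < dA")
      case True
      have "l + 1 \<noteq> c"
      proof
        assume lc: "l + 1 = c"
        then have "c = dA" using True False by simp
        have "As \<noteq> []" using c dB False by auto
        then have "c = block_start (A # As) 1" using \<open>c = dA\<close> unfolding dA_def by simp
        moreover have "1 < length (A # As)" using \<open>As \<noteq> []\<close> by simp
        ultimately show False using Cons.prems(4) by blast
      qed
      then show ?thesis using True False unfolding idx by simp
    next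
      case lF: False
      have "?B $$ (l - dA, c - dA) = (if l - dA + 1 = c - dA then 1 else 0)"
      proof (rule Cons.IH)
        show "\<forall>C\<in>set As. 0 < dim_row C \<and> companion_mat C (dim_row C)" using Cons.prems(1) by simp
        show "l - dA < sum_list (map dim_row As)" "c - dA < sum_list (map dim_row As)"
          using l c dB lF False by auto
        show "\<forall>i<length As. c - dA \<noteq> block_start As i"
        proof (intro allI impI notI)
          fix i assume "i < length As" "c - dA = block_start As i"
          then have "c = block_start (A # As) (Suc i)" "Suc i < length (A # As)"
            using False unfolding dA_def by auto
          then show False using Cons.prems(4) by blast
        qed
      qed
      then show ?thesis using lF False unfolding idx by auto
    qed
  qed
qed

lemma S_mat_entry:
  assumes "l < n" "c < n"
  shows "S_mat n $$ (l,c) = (if c = 0 then (if l = n - 1 then -1 else 0) else if l + 1 = c then 1 else 0)"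
  using assms unfolding S_mat_def by auto

lemma rcf_int:
  fixes F :: "int mat"
  assumes F: "F \<in> carrier_mat n n" and T: "T \<in> carrier_mat n n" and Ti: "Tinv \<in> carrier_mat n n"
    and TT: "T * Tinv = 1\<^sub>m n" "Tinv * T = 1\<^sub>m n"
    and Fb: "Fbar = T * map_mat of_int F * Tinv"
    and rcf: "rcf_blocks Fbar Cs"
    and ij: "i < n" "j < n"
  shows "Fbar $$ (i,j) \<in> \<int>"
proof -
  let ?F = "map_mat of_int F :: rat mat"
  have Fr: "?F \<in> carrier_mat n n" using F by simp
  have Fbc: "Fbar \<in> carrier_mat n n" unfolding Fb using T Ti Fr by auto
  have "similar_mat Fbar ?F"
    unfolding similar_mat_def similar_mat_wit_def Let_def
    using Fbc Fr T Ti TT Fb by (intro exI[of _ T] exI[of _ Tinv]) auto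
  then have "char_poly Fbar = char_poly ?F" by (rule char_poly_similar)
  also have "\<dots> = map_poly of_int (char_poly F)" by (rule of_int_hom.char_poly_hom[OF F])
  finally have cpF: "char_poly Fbar = map_poly of_int (char_poly F)" .
  have mF: "monic (char_poly F)" using degree_monic_char_poly[OF F] by simp
  have Cs: "Fbar = diag_block_mat Cs" "\<forall>C\<in>set Cs. 0 < dim_row C \<and> companion_mat C (dim_row C)"
    using rcf unfolding rcf_blocks_def by auto
  have sq: "\<And>A. A \<in> set Cs \<Longrightarrow> dim_col A = dim_row A"
    using Cs(2) unfolding companion_mat_def by auto
  have Cint: "C $$ (a,b) \<in> \<int>" if C: "C \<in> set Cs" and ab: "a < dim_row C" "b < dim_row C" for C a b
  proof -
    define d where "d = dim_row C"
    have comp: "companion_mat C d" and d0: "0 < d" using Cs(2) C unfolding d_def by auto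
    have Cc: "C \<in> carrier_mat d d" using comp unfolding companion_mat_def by simp
    show ?thesis
    proof (cases "b = 0")
      case True
      have "char_poly C dvd prod_list (map char_poly Cs)" using C by (intro prod_list_dvd) simp
      also have "\<dots> = char_poly Fbar" unfolding Cs(1) by (rule char_poly_diag_block[symmetric]) (rule sq)
      finally have dvd: "char_poly C dvd map_poly of_int (char_poly F)" unfolding cpF .
      have mC: "monic (char_poly C)" using degree_monic_char_poly[OF Cc] by simp
      have "coeff (char_poly C) (d - 1 - a) \<in> \<int>" by (rule gauss_monic[OF mC mF dvd])
      then show ?thesis using char_poly_companion[OF comp d0, of a] ab True unfolding d_def
        by (metis Ints_minus minus_minus)
    next
      case False
      then show ?thesis using comp ab unfolding companion_mat_def d_def by auto
    qed
  qed
  have "Fbar $$ (i,j) \<in> elements_mat Fbar" using Fbc ij unfolding elements_mat_def by force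
  then have "Fbar $$ (i,j) \<in> {0} \<union> \<Union> (set (map elements_mat Cs))"
    using elements_diag_block_mat[of Cs] Cs(1) by auto
  then show ?thesis using Cint sq by (auto dest!: elements_matD)
qed


lemma row_identity:
  fixes z :: "nat \<Rightarrow> rat"
  assumes rcf: "rcf_blocks Fbar Cs" and Fbc: "Fbar \<in> carrier_mat n n" and l: "l < n"
  shows "(\<Sum>c<n. Fbar $$ (l,c) * z c) =
    (\<Sum>i<length Cs. (Fbar - S_mat n) $$ (l, block_start Cs i) * z (block_start Cs i))
     + (if l + 1 < n then z (l + 1) else - z 0)"
proof -
  have Cs: "Fbar = diag_block_mat Cs" "\<forall>C\<in>set Cs. 0 < dim_row C \<and> companion_mat C (dim_row C)"
    using rcf unfolding rcf_blocks_def by auto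
  have pos: "\<forall>C\<in>set Cs. 0 < dim_row C" using Cs(2) by auto
  have tot: "sum_list (map dim_row Cs) = n" using Fbc Cs(1) dim_diag_block_mat[of Cs] by simp
  have ne: "0 < length Cs" using tot l by (cases Cs) auto
  have Sc: "S_mat n \<in> carrier_mat n n" unfolding S_mat_def by simp
  have split: "(\<Sum>c<n. Fbar $$ (l,c) * z c) = (\<Sum>c<n. (Fbar - S_mat n) $$ (l,c) * z c) + (\<Sum>c<n. S_mat n $$ (l,c) * z c)"
    using Fbc Sc l by (simp add: sum.distrib[symmetric] algebra_simps)
  have Srow: "(\<Sum>c<n. S_mat n $$ (l,c) * z c) = (if l + 1 < n then z (l + 1) else - z 0)"
  proof (cases "l + 1 < n")
    case True
    have "(\<Sum>c<n. S_mat n $$ (l,c) * z c) = (\<Sum>c<n. if c = l + 1 then z (l + 1) else 0)"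
      using True l by (intro sum.cong refl) (auto simp: S_mat_entry)
    then show ?thesis using True by simp
  next
    case False
    have "(\<Sum>c<n. S_mat n $$ (l,c) * z c) = (\<Sum>c<n. if c = 0 then - z 0 else 0)"
      using False l by (intro sum.cong refl) (auto simp: S_mat_entry)
    then show ?thesis using False l by simp
  qed
  let ?r = "block_start Cs"
  have sub: "?r ` {..<length Cs} \<subseteq> {..<n}" using block_start_lt_total[OF pos] tot by auto
  have "(\<Sum>c<n. (Fbar - S_mat n) $$ (l,c) * z c) = (\<Sum>c\<in>?r ` {..<length Cs}. (Fbar - S_mat n) $$ (l,c) * z c)"
  proof (rule sum.mono_neutral_right)
    show "finite {..<n}" by simp
    show "?r ` {..<length Cs} \<subseteq> {..<n}" by (rule sub)
    show "\<forall>c\<in>{..<n} - ?r ` {..<length Cs}. (Fbar - S_mat n) $$ (l,c) * z c = 0"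
    proof
      fix c assume c: "c \<in> {..<n} - ?r ` {..<length Cs}"
      then have cn: "c < n" and nb: "\<forall>i<length Cs. c \<noteq> ?r i" by auto
      have c0: "c \<noteq> 0" using nb ne by (metis block_start_0)
      have "Fbar $$ (l,c) = (if l + 1 = c then 1 else 0)"
        unfolding Cs(1) using diag_comp_col[OF Cs(2)] tot l cn nb by simp
      moreover have "S_mat n $$ (l,c) = (if l + 1 = c then 1 else 0)" using S_mat_entry[OF l cn] c0 by simp
      ultimately show "(Fbar - S_mat n) $$ (l,c) * z c = 0" using Fbc Sc l cn by simp
    qed
  qed
  also have "\<dots> = (\<Sum>i<length Cs. (Fbar - S_mat n) $$ (l, ?r i) * z (?r i))"
    by (rule sum.reindex_cong[OF block_start_inj[OF pos] refl]) simp
  finally show ?thesis using split Srow by simp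
qed

lemma eqv_eqI: "(\<And>k. k < N \<Longrightarrow> a k = b k) \<Longrightarrow> eqv N q a b"
  unfolding eqv_def by simp

lemma nm_lc_mono:
  assumes N: "0 < N" and k: "k < N"
  shows "nm N (lc N J c f) (xmono N e) k = lc N J c (\<lambda>j. f j + e) k"
  unfolding lc_def nm_sum_left nm_smult_left nm_mono_mono[OF N k] ..

lemma rsum_const_Xpow:
  assumes N: "0 < N"
  shows "eqv N q (rsum N q (\<lambda>i. rmul N q (rconst N q (c i)) (Xpow N q (e i))) I) (lc N I c e)"
proof -
  have "eqv N q (rsum N q (\<lambda>i. rmul N q (rconst N q (c i)) (Xpow N q (e i))) I)
     (\<lambda>k. \<Sum>i\<in>I. c i * xmono N (e i) k)"
  proof (rule rsum_eqv)
    fix i assume "i \<in> I"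
    show "eqv N q (rmul N q (rconst N q (c i)) (Xpow N q (e i))) (\<lambda>k. c i * xmono N (e i) k)"
    proof (rule eqv_trans[OF rmul_eqv[OF rconst_eqv Xpow_eqv]], rule eqv_eqI)
      fix k assume k: "k < N"
      show "nm N (\<lambda>k. c i * xmono N 0 k) (xmono N (e i)) k = c i * xmono N (e i) k"
        unfolding nm_smult_left nm_mono_mono[OF N k] by simp
    qed
  qed
  then show ?thesis unfolding lc_def .
qed

lemma rmul_lc_Xpow:
  assumes N: "0 < N" and a: "eqv N q a (lc N J c f)"
  shows "eqv N q (rmul N q a (Xpow N q e)) (lc N J c (\<lambda>j. f j + e))"
  by (rule eqv_trans[OF rmul_eqv[OF a Xpow_eqv]], rule eqv_eqI, rule nm_lc_mono[OF N])

lemma rsum_lc: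
  assumes "\<And>i. i \<in> I \<Longrightarrow> eqv N q (f i) (lc N J (c i) (e i))" and "finite I" "finite J"
  shows "eqv N q (rsum N q f I) (lc N (I \<times> J) (\<lambda>(i,j). c i j) (\<lambda>(i,j). e i j))"
proof -
  have "eqv N q (rsum N q f I) (\<lambda>k. \<Sum>i\<in>I. lc N J (c i) (e i) k)"
    by (rule rsum_eqv) (rule assms(1))
  moreover have "eqv N q (\<lambda>k. \<Sum>i\<in>I. lc N J (c i) (e i) k) (lc N (I \<times> J) (\<lambda>(i,j). c i j) (\<lambda>(i,j). e i j))"
    by (rule eqv_eqI) (simp add: lc_def sum.cartesian_product split_beta)
  ultimately show ?thesis by (rule eqv_trans)
qed

lemma rmul_lc_lc:
  assumes N: "0 < N" and a: "eqv N q a (lc N I c e)" and b: "eqv N q b (lc N J d f)"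
  shows "eqv N q (rmul N q a b) (\<lambda>k. \<Sum>x\<in>I. \<Sum>y\<in>J. c x * d y * xmono N (e x + f y) k)"
  by (rule eqv_trans[OF rmul_eqv[OF a b]], rule eqv_eqI, rule lc_mul[OF N])

lemma Slot1_eqv:
  assumes N: "0 < N"
  shows "eqv N q (Slot N 1 w) (\<lambda>k. w 0 * xmono N 0 k)"
  by (rule eqv_eqI) (auto simp: Slot_def mono_at)

lemma Slotn_eq:
  assumes N: "N = n * D" and D: "0 < D" and k: "k < N"
  shows "Slot N n w k = lc N {..<n} (\<lambda>j. w (j * D)) (\<lambda>j. int (j * D)) k"
proof -
  have n: "0 < n" using N k by (cases n) auto
  have ND: "i * N div n = i * D" for i using N n by simp
  have "lc N {..<n} (\<lambda>j. w (j * D)) (\<lambda>j. int (j * D)) k = (\<Sum>j<n. if k = j * D then w (j * D) else 0)"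
    unfolding lc_def
  proof (intro sum.cong refl)
    fix j assume j: "j \<in> {..<n}"
    have "j * D < N" using j N D by simp
    then have lt: "0 \<le> int (j * D)" "int (j * D) < int N" by (simp, simp only: of_nat_less_iff)
    then have "int (j * D) mod int N = int (j * D)" "int (j * D) div int N = 0"
      by (simp_all only: mod_pos_pos_trivial div_pos_pos_trivial)
    then show "w (j * D) * xmono N (int (j * D)) k = (if k = j * D then w (j * D) else 0)"
      unfolding mono_at by (auto simp del: of_nat_mult)
  qed
  also have "\<dots> = Slot N n w k"
  proof (cases "\<exists>i<n. k = i * D")
    case True
    then obtain i where i: "i < n" "k = i * D" by blast
    have "(\<Sum>j<n. if k = j * D then w (j * D) else 0) = (\<Sum>j<n. if j = i then w k else 0)"
      using i D by (intro sum.cong refl) auto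
    then show ?thesis using i k unfolding Slot_def ND by auto
  next
    case False
    then show ?thesis using k unfolding Slot_def ND by auto
  qed
  finally show ?thesis by simp
qed

lemma cmod_range:
  assumes "0 < q"
  shows "- q \<le> 2 * cmod q a" "2 * cmod q a < q"
proof -
  define y where "y = (rat_of_int a + rat_of_int q / 2) / rat_of_int q"
  have q: "rat_of_int q > 0" using assms by simp
  have f1: "rat_of_int \<lfloor>y\<rfloor> \<le> y" "y < rat_of_int \<lfloor>y\<rfloor> + 1" by linarith+
  have "rat_of_int \<lfloor>y\<rfloor> * rat_of_int q \<le> y * rat_of_int q" using f1 q by (intro mult_right_mono) auto
  moreover have "y * rat_of_int q < (rat_of_int \<lfloor>y\<rfloor> + 1) * rat_of_int q" using f1 q by (intro mult_strict_right_mono) auto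
  moreover have "y * rat_of_int q = rat_of_int a + rat_of_int q / 2" unfolding y_def using q by simp
  ultimately have r1: "rat_of_int (\<lfloor>y\<rfloor> * q) \<le> rat_of_int a + rat_of_int q / 2"
    and r2: "rat_of_int a + rat_of_int q / 2 < rat_of_int (\<lfloor>y\<rfloor> * q) + rat_of_int q"
    by (simp_all add: algebra_simps)
  have c: "cmod q a = a - \<lfloor>y\<rfloor> * q" unfolding cmod_def y_def ..
  have "rat_of_int (- q) \<le> rat_of_int (2 * cmod q a)" unfolding c using r1 by simp
  then show "- q \<le> 2 * cmod q a" by (simp only: of_int_le_iff)
  have "rat_of_int (2 * cmod q a) < rat_of_int q" unfolding c using r2 by simp
  then show "2 * cmod q a < q" by (simp only: of_int_less_iff)
qed

lemma mod_eq_small: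
  fixes a b q :: int
  assumes q: "0 < q" and "a mod q = b mod q" "- q \<le> 2 * a" "2 * a < q" "- q \<le> 2 * b" "2 * b < q"
  shows "a = b"
proof -
  have "q dvd (a - b)" using assms(2) by (simp add: mod_eq_dvd_iff)
  then obtain k where k: "a - b = q * k" by (elim dvdE)
  have "\<bar>a - b\<bar> < q" using assms by linarith
  then have "\<bar>k * q\<bar> < q" using k by (simp add: mult.commute)
  then have "k = 0" using small_mult_zero[OF q] by simp
  then show ?thesis using k by simp
qed

lemma lc_eval_D:
  assumes N: "N = n * D" and D: "0 < D" and l: "l < n"
  shows "lc N {..<n} c (\<lambda>i. int (i * D)) (l * D) = c l"
proof -
  have "lc N {..<n} c (\<lambda>i. int (i * D)) (l * D) = (\<Sum>i<n. if i = l then c l else 0)"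
    unfolding lc_def
  proof (intro sum.cong refl)
    fix i assume i: "i \<in> {..<n}"
    have "xmono N (int (i * D)) (l * D) = (if i = l then 1 else 0)"
      using mono_pos_G[OF N D, of i l 0 0] i l D by simp
    then show "c i * xmono N (int (i * D)) (l * D) = (if i = l then c l else 0)" by auto
  qed
  also have "\<dots> = c l" using l by simp
  finally show ?thesis .
qed

lemma GY_eval:
  assumes N: "N = n * D" and D: "0 < D" and l: "l < n" and p: "p \<le> D"
  shows "(\<Sum>x\<in>{..<n} \<times> {..<p}. \<Sum>y\<in>{..<p}. (case x of (i,j) \<Rightarrow> g i j) * h y *
            xmono N ((case x of (i,j) \<Rightarrow> - int j + int (i * D)) + int y) (l * D))
         = (\<Sum>j<p. g l j * h j)"
proof -
  have cp: "(\<Sum>x\<in>A \<times> B. F x) = (\<Sum>i\<in>A. \<Sum>j\<in>B. F (i,j))" for A B and F :: "'x \<times> 'y \<Rightarrow> int"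
    unfolding sum.cartesian_product by simp
  have "(\<Sum>x\<in>{..<n} \<times> {..<p}. \<Sum>y\<in>{..<p}. (case x of (i,j) \<Rightarrow> g i j) * h y *
            xmono N ((case x of (i,j) \<Rightarrow> - int j + int (i * D)) + int y) (l * D))
      = (\<Sum>i<n. \<Sum>j<p. \<Sum>y<p. g i j * h y * xmono N (- int j + int (i * D) + int y) (l * D))"
    unfolding cp by simp
  also have "\<dots> = (\<Sum>i<n. \<Sum>j<p. \<Sum>y<p. g i j * h y * xmono N (int (i * D) + (int y - int j)) (l * D))"
  proof -
    have e: "\<And>i j y. - int j + int (i * D) + int y = int (i * D) + (int y - int j)" by simp
    show ?thesis by (simp only: e)
  qed
  also have "\<dots> = (\<Sum>i<n. \<Sum>j<p. \<Sum>y<p. if i = l \<and> j = y then g l j * h j else 0)"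
  proof (intro sum.cong refl)
    fix i j y assume "i \<in> {..<n}" "j \<in> {..<p}" "y \<in> {..<p}"
    then show "g i j * h y * xmono N (int (i * D) + (int y - int j)) (l * D) = (if i = l \<and> j = y then g l j * h j else 0)"
      using mono_pos_G[OF N D, of i l j y] l p by auto
  qed
  also have "\<dots> = (\<Sum>i<n. if i = l then (\<Sum>j<p. g l j * h j) else 0)"
  proof (intro sum.cong refl)
    fix i assume "i \<in> {..<n}"
    have "(\<Sum>j<p. \<Sum>y<p. if i = l \<and> j = y then g l j * h j else 0) = (\<Sum>j<p. if i = l then g l j * h j else 0)"
      by (intro sum.cong refl) auto
    then show "(\<Sum>j<p. \<Sum>y<p. if i = l \<and> j = y then g l j * h j else 0) = (if i = l then (\<Sum>j<p. g l j * h j) else 0)"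
      by simp
  qed
  also have "\<dots> = (\<Sum>j<p. g l j * h j)" using l by simp
  finally show ?thesis .
qed


lemma HS_eval:
  assumes N: "N = n * D" and D: "D = \<tau> * E" and E: "0 < E" and l: "l < m" and m: "m \<le> \<tau>"
  shows "(\<Sum>x\<in>{..<m} \<times> {..<n}. \<Sum>y\<in>{..<n}. (case x of (i,j) \<Rightarrow> g i j) * h y *
            xmono N ((case x of (i,j) \<Rightarrow> - int (j * D) + int (i * E)) + int (y * D)) (l * E))
         = (\<Sum>j<n. g l j * h j)"
proof -
  have cp: "(\<Sum>x\<in>A \<times> B. F x) = (\<Sum>i\<in>A. \<Sum>j\<in>B. F (i,j))" for A B and F :: "'x \<times> 'y \<Rightarrow> int"
    unfolding sum.cartesian_product by simp
  have "(\<Sum>x\<in>{..<m} \<times> {..<n}. \<Sum>y\<in>{..<n}. (case x of (i,j) \<Rightarrow> g i j) * h y *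
            xmono N ((case x of (i,j) \<Rightarrow> - int (j * D) + int (i * E)) + int (y * D)) (l * E))
      = (\<Sum>i<m. \<Sum>j<n. \<Sum>y<n. g i j * h y * xmono N (- int (j * D) + int (i * E) + int (y * D)) (l * E))"
    unfolding cp by simp
  also have "\<dots> = (\<Sum>i<m. \<Sum>j<n. \<Sum>y<n. g i j * h y * xmono N (int (i * E) + (int (y * D) - int (j * D))) (l * E))"
  proof -
    have e: "\<And>i j y. - int (j * D) + int (i * E) + int (y * D) = int (i * E) + (int (y * D) - int (j * D))" by simp
    show ?thesis by (simp only: e)
  qed
  also have "\<dots> = (\<Sum>i<m. \<Sum>j<n. \<Sum>y<n. if i = l \<and> j = y then g l j * h j else 0)"
  proof (intro sum.cong refl)
    fix i j y assume "i \<in> {..<m}" "j \<in> {..<n}" "y \<in> {..<n}"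
    then show "g i j * h y * xmono N (int (i * E) + (int (y * D) - int (j * D))) (l * E) = (if i = l \<and> j = y then g l j * h j else 0)"
      using mono_pos_H[OF N D E, of i l j y] l m by auto
  qed
  also have "\<dots> = (\<Sum>i<m. if i = l then (\<Sum>j<n. g l j * h j) else 0)"
  proof (intro sum.cong refl)
    fix i assume "i \<in> {..<m}"
    have "(\<Sum>j<n. \<Sum>y<n. if i = l \<and> j = y then g l j * h j else 0) = (\<Sum>j<n. if i = l then g l j * h j else 0)"
      by (intro sum.cong refl) auto
    then show "(\<Sum>j<n. \<Sum>y<n. if i = l \<and> j = y then g l j * h j else 0) = (if i = l then (\<Sum>j<n. g l j * h j) else 0)"
      by simp
  qed
  also have "\<dots> = (\<Sum>j<n. g l j * h j)" using l by simp
  finally show ?thesis .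
qed

lemma smult_mat_mult_vec:
  assumes "A \<in> carrier_mat nr nc" "v \<in> carrier_vec nc"
  shows "(k \<cdot>\<^sub>m A) *\<^sub>v v = k \<cdot>\<^sub>v (A *\<^sub>v (v :: 'a :: comm_ring_1 vec))"
  using assms by (intro eq_vecI) (auto simp: scalar_prod_smult_left)

lemma map_vec_of_int_add:
  assumes "u \<in> carrier_vec n" "w \<in> carrier_vec n"
  shows "map_vec (of_int :: int \<Rightarrow> 'a :: ring_1) (u + w) = map_vec of_int u + map_vec of_int w"
  using assms by (intro eq_vecI) auto

lemma map_vec_of_int_mult:
  assumes "A \<in> carrier_mat nr n" "v \<in> carrier_vec n"
  shows "map_vec (of_int :: int \<Rightarrow> rat) (A *\<^sub>v v) = map_mat of_int A *\<^sub>v map_vec of_int v"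
  using of_int_hom.mult_mat_vec_hom[OF assms] by simp


lemma neg_shift_divmod:
  assumes N: "N = n * D" and D: "0 < D" and r: "0 < r" "r \<le> n"
  shows "(- int (r * D)) mod int N = int (N - r * D)" "(- int (r * D)) div int N = -1"
proof -
  have le: "r * D \<le> N" using N r by simp
  have "- int (r * D) = (-1) * int N + int (N - r * D)" using le by simp
  moreover have "0 \<le> int (N - r * D)" by simp
  moreover have "int (N - r * D) < int N" using r D le N by (simp add: of_nat_diff)
  moreover have "0 < N" using N D r by simp
  ultimately show "(- int (r * D)) mod int N = int (N - r * D)" "(- int (r * D)) div int N = -1"
    using divmod_split[of N "- int (r * D)" "-1" "int (N - r * D)"] by auto
qed

lemma X1:
  assumes N: "N = n * D" and D: "0 < D" and r: "r < n"
  shows "nm N (xmono N (- int (r * D))) b 0 = b (r * D)"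
proof -
  have N0: "0 < N" using N D r by simp
  show ?thesis
  proof (cases "r = 0")
    case True
    then show ?thesis using nm_mono_left[OF N0 N0, of 0 b] by simp
  next
    case False
    note dm = neg_shift_divmod[OF N D, of r]
    have "nat (int (N - r * D)) = N - r * D" by simp
    then show ?thesis using nm_mono_left[OF N0 N0, of "- int (r * D)" b] False r dm N D
      by (auto simp: Let_def)
  qed
qed

lemma X2:
  assumes N: "N = n * D" and D: "0 < D" and l: "l < n"
  shows "nm N (xmono N (- int D)) b (l * D) = (if l + 1 < n then b ((l + 1) * D) else - b 0)"
proof -
  have N0: "0 < N" using N D l by simp
  have k: "l * D < N" using N l D by simp
  note dm = neg_shift_divmod[OF N D, of 1]
  have n1: "0 < n" using l by simp
  have m1: "(- int D) mod int N = int (N - D)" and d1: "(- int D) div int N = -1" using dm n1 by simp_all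
  have s1: "nat ((- int D) mod int N) = N - D" unfolding m1 by simp
  have "nm N (xmono N (- int D)) b (l * D) =
     (if N - D \<le> l * D then - b (l * D - (N - D)) else b (l * D + N - (N - D)))"
    unfolding nm_mono_left[OF N0 k, of "- int D" b] Let_def s1 d1 by simp
  also have "\<dots> = (if l + 1 < n then b ((l + 1) * D) else - b 0)"
  proof (cases "l + 1 < n")
    case True
    have "(l + 2) * D \<le> n * D" using True by (intro mult_le_mono1) simp
    then have "l * D + D + D \<le> N" using N by simp
    then have "\<not> N - D \<le> l * D" and "l * D + D \<le> N" using D by linarith+
    moreover have "l * D + N - (N - D) = (l + 1) * D" using \<open>l * D + D \<le> N\<close> by simp
    ultimately show ?thesis using True by (simp add: add.commute)
  next
    case False
    then have "l = n - 1" using l by simp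
    then have "l * D = N - D" using N n1 by (simp add: diff_mult_distrib)
    then show ?thesis using False by simp
  qed
  finally show ?thesis .
qed

lemma Pack_eqv:
  assumes N0: "0 < N" and N: "N = n * D" and D: "0 < D"
  shows "eqv N q (Pack N n q a) (lc N {..<n} (\<lambda>i. a $ i) (\<lambda>i. int (i * D)))"
proof -
  have n: "0 < n" using N N0 by (cases n) auto
  have "eqv N q (Pack N n q a) (lc N {..<n} (\<lambda>i. a $ i) (\<lambda>i. int (i * N div n)))"
    unfolding Pack_def by (rule rsum_const_Xpow[OF N0])
  moreover have "(\<lambda>i. int (i * N div n)) = (\<lambda>i. int (i * D))" using N n by simp
  ultimately show ?thesis by simp
qed

lemma Gt_eqv:
  assumes N0: "0 < N" and N: "N = n * D" and D: "0 < D"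
  shows "eqv N q (rsum N q (\<lambda>i. rmul N q
                      (rsum N q (\<lambda>j. rmul N q (rconst N q (Gb $$ (i, j))) (Xpow N q (- int j))) {..<p})
                      (Xpow N q (int (i * N div n)))) {..<n})
     (lc N ({..<n} \<times> {..<p}) (\<lambda>(i,j). Gb $$ (i,j)) (\<lambda>(i,j). - int j + int (i * D)))"
proof -
  have n: "0 < n" using N N0 by (cases n) auto
  have ND: "i * N div n = i * D" for i using N n by simp
  show ?thesis unfolding ND
  proof (rule rsum_lc)
    fix i assume "i \<in> {..<n}"
    show "eqv N q (rmul N q (rsum N q (\<lambda>j. rmul N q (rconst N q (Gb $$ (i, j))) (Xpow N q (- int j))) {..<p})
          (Xpow N q (int (i * D)))) (lc N {..<p} (\<lambda>j. Gb $$ (i,j)) (\<lambda>j. - int j + int (i * D)))"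
      by (rule rmul_lc_Xpow[OF N0 rsum_const_Xpow[OF N0]])
  qed auto
qed

lemma Ht_eqv:
  assumes N0: "0 < N" and N: "N = n * D" and D: "0 < D" and DE: "D = \<tau> * E" and E: "0 < E"
  shows "eqv N q (rsum N q (\<lambda>i. rmul N q
                      (rsum N q (\<lambda>j. rmul N q (rconst N q (Hb $$ (i, j)))
                                        (Xpow N q (- int (j * N div n)))) {..<n})
                      (Xpow N q (int (i * N div (n * \<tau>))))) {..<m})
     (lc N ({..<m} \<times> {..<n}) (\<lambda>(i,j). Hb $$ (i,j)) (\<lambda>(i,j). - int (j * D) + int (i * E)))"
proof -
  have n: "0 < n" using N N0 by (cases n) auto
  have t: "0 < \<tau>" using DE D by (cases \<tau>) auto
  have ND: "i * N div n = i * D" for i using N n by simp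
  have NE: "i * N div (n * \<tau>) = i * E" for i using N DE n t by (simp add: ac_simps)
  show ?thesis unfolding ND NE
  proof (rule rsum_lc)
    fix i assume "i \<in> {..<m}"
    show "eqv N q (rmul N q (rsum N q (\<lambda>j. rmul N q (rconst N q (Hb $$ (i, j))) (Xpow N q (- int (j * D)))) {..<n})
          (Xpow N q (int (i * E)))) (lc N {..<n} (\<lambda>j. Hb $$ (i,j)) (\<lambda>j. - int (j * D) + int (i * E)))"
      by (rule rmul_lc_Xpow[OF N0 rsum_const_Xpow[OF N0]])
  qed auto
qed

theorem theorem1:
  fixes n p m N :: nat and q :: int and \<tau> :: nat
    and F :: "int mat" and G :: "rat mat" and H :: "rat mat" and xini :: "rat vec"
    and y :: "nat \<Rightarrow> rat vec" and x :: "nat \<Rightarrow> rat vec" and u :: "nat \<Rightarrow> rat vec"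
    and T Tinv Fbar :: "rat mat" and Cs :: "rat mat list"
    and L s1 s2 :: rat
    and Gb Hb :: "int mat" and zini :: "int vec" and yb :: "nat \<Rightarrow> int vec"
    and zt :: "nat \<Rightarrow> rq"
    and Ft :: "nat \<Rightarrow> rq" and Gt Ht :: rq and yt :: "nat \<Rightarrow> rq" and ut :: "nat \<Rightarrow> rq"
    and u' :: "nat \<Rightarrow> rat vec"
  assumes F_dim: "F \<in> carrier_mat n n"
    and G_dim: "G \<in> carrier_mat n p"
    and H_dim: "H \<in> carrier_mat m n"
    and xini_dim: "xini \<in> carrier_vec n"
    and y_dim: "\<And>t. y t \<in> carrier_vec p"
    and x_0: "x 0 = xini"
    and x_step: "\<And>t. x (Suc t) = map_mat of_int F *\<^sub>v x t + G *\<^sub>v y t"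
    and u_def: "\<And>t. u t = H *\<^sub>v x t"
    and T_dim: "T \<in> carrier_mat n n" and Tinv_dim: "Tinv \<in> carrier_mat n n"
    and T_inv: "T * Tinv = 1\<^sub>m n" "Tinv * T = 1\<^sub>m n"
    and Fbar_def: "Fbar = T * map_mat of_int F * Tinv"
    and rcf: "rcf_blocks Fbar Cs"
    and L_scale: "L \<noteq> 0" "1 / L \<in> \<nat>"
    and s1_scale: "s1 \<noteq> 0" "1 / s1 \<in> \<nat>"
    and s2_scale: "s2 \<noteq> 0" "1 / s2 \<in> \<nat>"
    and Gb_dim: "Gb \<in> carrier_mat n p"
    and Gb_def: "map_mat of_int Gb = (1 / s1) \<cdot>\<^sub>m (T * G)"
    and Hb_dim: "Hb \<in> carrier_mat m n"
    and Hb_def: "map_mat of_int Hb = (1 / s2) \<cdot>\<^sub>m (H * Tinv)"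
    and zini_dim: "zini \<in> carrier_vec n"
    and zini_def: "map_vec of_int zini = (1 / (L * s1)) \<cdot>\<^sub>v (T *\<^sub>v xini)"
    and yb_dim: "\<And>t. yb t \<in> carrier_vec p"
    and yb_def: "\<And>t. map_vec of_int (yb t) = (1 / L) \<cdot>\<^sub>v y t"
    and q_prime: "prime q"
    and N_pow2: "\<exists>k. N = 2 ^ k"
    and n_pow2: "\<exists>k. n = 2 ^ k"
    and n_dvd_N: "n dvd N"
    and np_le_N: "n * p \<le> N"
    and tau_def: "\<tau> = 2 ^ nat \<lceil>log 2 (real m)\<rceil>"
    and tau_le: "\<tau> \<le> N div n"
    and Ft_def: "\<And>i. Ft i = Pack N n q (map_vec floor (col (Fbar - S_mat n) (block_start Cs i)))"
    and Gt_def: "Gt = rsum N q (\<lambda>i. rmul N q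
                      (rsum N q (\<lambda>j. rmul N q (rconst N q (Gb $$ (i, j))) (Xpow N q (- int j))) {..<p})
                      (Xpow N q (int (i * N div n)))) {..<n}"
    and yt_def: "\<And>t. yt t = rsum N q (\<lambda>j. rmul N q (rconst N q (yb t $ j)) (Xpow N q (int j))) {..<p}"
    and Ht_def: "Ht = rsum N q (\<lambda>i. rmul N q
                      (rsum N q (\<lambda>j. rmul N q (rconst N q (Hb $$ (i, j)))
                                        (Xpow N q (- int (j * N div n)))) {..<n})
                      (Xpow N q (int (i * N div (n * \<tau>))))) {..<m}"
    and zt_0: "zt 0 = Pack N n q zini"
    and zt_step: "\<And>t. zt (Suc t) =
       radd N q (radd N q
         (rsum N q (\<lambda>i. rmul N q (Ft i)
             (Slot N 1 (rmul N q (Xpow N q (- int (block_start Cs i * N div n))) (zt t))))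
           {..<length Cs})
         (rmul N q (Xpow N q (- int (N div n))) (zt t)))
         (rmul N q Gt (yt t))"
    and ut_def: "\<And>t. ut t = rmul N q Ht (Slot N n (zt t))"
    and u'_def: "\<And>t. u' t = (L * s1 * s2) \<cdot>\<^sub>v map_vec of_int (Unpack N n \<tau> m (ut t))"
    and bound: "(SUP t. ereal (real_of_rat (max (vnorm_inf ((1 / (L * s1)) \<cdot>\<^sub>v (T *\<^sub>v x t)))
                                          (vnorm_inf ((1 / (L * s1 * s2)) \<cdot>\<^sub>v u t)))))
                < ereal (real_of_int q / 2)"
  shows "\<forall>t. u' t = u t"
proof -
  have q0: "0 < q" using q_prime by (simp add: prime_gt_0_int)
  obtain kN where kN: "N = 2 ^ kN" using N_pow2 by blast
  obtain kn where kn: "n = 2 ^ kn" using n_pow2 by blast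
  have n0: "0 < n" using kn by simp
  have N0: "0 < N" using kN by simp
  define D where "D = N div n"
  have ND: "N = n * D" using n_dvd_N unfolding D_def by simp
  have D0: "0 < D" using ND N0 by (cases D) auto
  have pD: "p \<le> D" using np_le_N ND n0 by simp
  have posD: "\<And>i. i * N div n = i * D" using ND n0 by simp
  have "n \<le> N" using n_dvd_N N0 by (simp add: dvd_imp_le)
  then have knN: "kn \<le> kN" using kn kN by (simp add: power_increasing_iff)
  have "2 ^ kN = 2 ^ kn * (2::nat) ^ (kN - kn)" using knN by (simp add: power_add[symmetric])
  then have D2: "D = 2 ^ (kN - kn)" using ND kn kN by simp
  define a where "a = nat \<lceil>log 2 (real m)\<rceil>"
  have tau: "\<tau> = 2 ^ a" unfolding a_def tau_def ..
  have "(2::nat) ^ a \<le> 2 ^ (kN - kn)" using tau_le tau D2 D_def by simp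
  then have "a \<le> kN - kn" by (simp add: power_increasing_iff)
  then have tau_dvd: "\<tau> dvd D" unfolding tau D2 by (rule le_imp_power_dvd)
  define E where "E = D div \<tau>"
  have DE: "D = \<tau> * E" using tau_dvd unfolding E_def by simp
  have E0: "0 < E" using DE D0 by (cases E) auto
  have m_le: "m \<le> \<tau>"
  proof (cases "m = 0")
    case True then show ?thesis by simp
  next
    case False
    then have m1: "1 \<le> real m" by simp
    have "log 2 (real m) \<le> of_int \<lceil>log 2 (real m)\<rceil>" by (rule le_of_int_ceiling)
    also have "\<dots> \<le> real a" unfolding a_def by linarith
    finally have la: "log 2 (real m) \<le> real a" .
    have "real m = 2 powr (log 2 (real m))" using m1 by simp
    also have "\<dots> \<le> 2 powr (real a)" using la by (intro powr_mono) auto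
    also have "\<dots> = real \<tau>" unfolding tau by (simp add: powr_realpow)
    finally show ?thesis by simp
  qed
  let ?Fr = "map_mat of_int F :: rat mat"
  have Fr: "?Fr \<in> carrier_mat n n" using F_dim by simp
  have x_dim: "\<And>t. x t \<in> carrier_vec n"
  proof -
    fix t show "x t \<in> carrier_vec n"
      by (induction t) (use x_0 xini_dim x_step Fr G_dim y_dim in auto)
  qed
  have Fbc: "Fbar \<in> carrier_mat n n" unfolding Fbar_def using T_dim Tinv_dim Fr by auto
  have Fbar_int: "\<And>i j. i < n \<Longrightarrow> j < n \<Longrightarrow> Fbar $$ (i,j) \<in> \<int>"
    by (rule rcf_int[OF F_dim T_dim Tinv_dim T_inv Fbar_def rcf])
  define Fi where "Fi = map_mat (\<lambda>r. \<lfloor>r\<rfloor>) Fbar"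
  have Fi_c: "Fi \<in> carrier_mat n n" unfolding Fi_def using Fbc by simp
  have of_int_floor: "\<And>r::rat. r \<in> \<int> \<Longrightarrow> of_int \<lfloor>r\<rfloor> = r" by (metis Ints_cases floor_of_int)
  have FiF: "map_mat of_int Fi = Fbar"
    using Fbc Fbar_int unfolding Fi_def by (intro eq_matI) (auto simp: of_int_floor)
  define zi where "zi = rec_nat zini (\<lambda>t z. Fi *\<^sub>v z + Gb *\<^sub>v yb t)"
  have zi0: "zi 0 = zini" and ziS: "\<And>t. zi (Suc t) = Fi *\<^sub>v zi t + Gb *\<^sub>v yb t"
    unfolding zi_def by simp_all
  have zi_dim: "\<And>t. zi t \<in> carrier_vec n"
  proof -
    fix t show "zi t \<in> carrier_vec n"
      by (induction t) (use zi0 ziS zini_dim Fi_c Gb_dim yb_dim in auto)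
  qed
  define zr where "zr t = (1 / (L * s1)) \<cdot>\<^sub>v (T *\<^sub>v x t)" for t
  have zr_eq: "\<And>t. map_vec of_int (zi t) = zr t"
  proof -
    fix t show "map_vec of_int (zi t) = zr t"
    proof (induction t)
      case 0 then show ?case unfolding zi0 zini_def zr_def x_0 ..
    next
      case (Suc t)
      have Tx: "T *\<^sub>v x t \<in> carrier_vec n" using T_dim x_dim by simp
      have FTx: "Fbar *\<^sub>v (T *\<^sub>v x t) = T *\<^sub>v (?Fr *\<^sub>v x t)"
      proof -
        have "Fbar *\<^sub>v (T *\<^sub>v x t) = (Fbar * T) *\<^sub>v x t" using Fbc T_dim x_dim by simp
        also have "Fbar * T = T * ?Fr * (Tinv * T)" unfolding Fbar_def
          by (rule assoc_mult_mat[OF mult_carrier_mat[OF T_dim Fr] Tinv_dim T_dim])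
        also have "\<dots> = T * ?Fr" unfolding T_inv(2) using T_dim Fr by simp
        also have "(T * ?Fr) *\<^sub>v x t = T *\<^sub>v (?Fr *\<^sub>v x t)" using T_dim Fr x_dim by simp
        finally show ?thesis .
      qed
      have "map_vec of_int (zi (Suc t)) = map_vec of_int (Fi *\<^sub>v zi t) + map_vec of_int (Gb *\<^sub>v yb t)"
        unfolding ziS using Fi_c zi_dim Gb_dim yb_dim by (intro map_vec_of_int_add[of _ n]) auto
      also have "map_vec of_int (Fi *\<^sub>v zi t) = Fbar *\<^sub>v zr t"
        using map_vec_of_int_mult[OF Fi_c zi_dim] Suc FiF by simp
      also have "\<dots> = (1 / (L * s1)) \<cdot>\<^sub>v (T *\<^sub>v (?Fr *\<^sub>v x t))"
        unfolding zr_def using mult_mat_vec[OF Fbc Tx] FTx by simp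
      also have "map_vec (of_int :: int \<Rightarrow> rat) (Gb *\<^sub>v yb t) = map_mat of_int Gb *\<^sub>v map_vec of_int (yb t)"
        using map_vec_of_int_mult[OF Gb_dim yb_dim[of t]] by simp
      also have "\<dots> = ((1 / s1) \<cdot>\<^sub>m (T * G)) *\<^sub>v ((1 / L) \<cdot>\<^sub>v y t)" unfolding Gb_def yb_def ..
      also have "\<dots> = (1 / (L * s1)) \<cdot>\<^sub>v (T *\<^sub>v (G *\<^sub>v y t))"
        using T_dim G_dim y_dim
        by (simp add: smult_mat_mult_vec[of _ n p] mult_mat_vec[of _ n p] smult_smult_assoc)
      also have "(1 / (L * s1)) \<cdot>\<^sub>v (T *\<^sub>v (?Fr *\<^sub>v x t)) + (1 / (L * s1)) \<cdot>\<^sub>v (T *\<^sub>v (G *\<^sub>v y t)) = zr (Suc t)"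
        unfolding zr_def x_step using T_dim Fr G_dim x_dim y_dim
        by (simp add: mult_add_distrib_mat_vec[of _ n n] smult_add_distrib_vec[of _ n])
      finally show ?case .
    qed
  qed
  have u_eq: "\<And>t. map_vec of_int (Hb *\<^sub>v zi t) = (1 / (L * s1 * s2)) \<cdot>\<^sub>v u t"
  proof -
    fix t
    have "map_vec of_int (Hb *\<^sub>v zi t) = map_mat of_int Hb *\<^sub>v zr t"
      using map_vec_of_int_mult[OF Hb_dim zi_dim] zr_eq by simp
    also have "\<dots> = ((1 / s2) \<cdot>\<^sub>m (H * Tinv)) *\<^sub>v ((1 / (L * s1)) \<cdot>\<^sub>v (T *\<^sub>v x t))" unfolding Hb_def zr_def ..
    also have "\<dots> = (1 / s2) \<cdot>\<^sub>v ((1 / (L * s1)) \<cdot>\<^sub>v ((H * Tinv) *\<^sub>v (T *\<^sub>v x t)))"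
      using H_dim Tinv_dim T_dim x_dim
      by (simp add: smult_mat_mult_vec[of _ m n] mult_mat_vec[of _ m n] smult_smult_assoc mult.commute del: assoc_mult_mat_vec)
    also have "(H * Tinv) *\<^sub>v (T *\<^sub>v x t) = ((H * Tinv) * T) *\<^sub>v x t"
      using H_dim Tinv_dim T_dim x_dim by (intro assoc_mult_mat_vec[symmetric]) auto
    also have "(H * Tinv) * T = H" using H_dim Tinv_dim T_dim T_inv(2) by simp
    also have "(1 / s2) \<cdot>\<^sub>v ((1 / (L * s1)) \<cdot>\<^sub>v (H *\<^sub>v x t)) = (1 / (L * s1 * s2)) \<cdot>\<^sub>v (H *\<^sub>v x t)"
      by (simp add: smult_smult_assoc mult.commute mult.left_commute)
    finally show "map_vec of_int (Hb *\<^sub>v zi t) = (1 / (L * s1 * s2)) \<cdot>\<^sub>v u t" unfolding u_def .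
  qed
  have vn: "\<And>v i. i < dim_vec v \<Longrightarrow> \<bar>v $ i\<bar> \<le> vnorm_inf v"
  proof -
    fix v :: "rat vec" and i assume i: "i < dim_vec v"
    have "{\<bar>v $ i\<bar> | i. i < dim_vec v} = (\<lambda>i. \<bar>v $ i\<bar>) ` {..<dim_vec v}" by auto
    then have fin: "finite (insert 0 {\<bar>v $ i\<bar> | i. i < dim_vec v})" by simp
    show "\<bar>v $ i\<bar> \<le> vnorm_inf v" unfolding vnorm_inf_def using i by (intro Max_ge[OF fin]) auto
  qed
  have bnd: "\<And>t. max (vnorm_inf ((1 / (L * s1)) \<cdot>\<^sub>v (T *\<^sub>v x t))) (vnorm_inf ((1 / (L * s1 * s2)) \<cdot>\<^sub>v u t))
      < rat_of_int q / 2"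
  proof -
    fix t
    let ?M = "max (vnorm_inf ((1 / (L * s1)) \<cdot>\<^sub>v (T *\<^sub>v x t))) (vnorm_inf ((1 / (L * s1 * s2)) \<cdot>\<^sub>v u t))"
    have "ereal (real_of_rat ?M) \<le> (SUP t. ereal (real_of_rat (max (vnorm_inf ((1 / (L * s1)) \<cdot>\<^sub>v (T *\<^sub>v x t)))
                                          (vnorm_inf ((1 / (L * s1 * s2)) \<cdot>\<^sub>v u t)))))"
      by (rule SUP_upper) simp
    then have "ereal (real_of_rat ?M) < ereal (real_of_int q / 2)" using bound by (rule le_less_trans)
    then have "real_of_rat ?M < real_of_rat (rat_of_int q / 2)" by (simp add: of_rat_divide)
    then show "?M < rat_of_int q / 2" by (simp only: of_rat_less)
  qed
  have small: "\<And>r z. \<bar>r\<bar> < rat_of_int q / 2 \<Longrightarrow> r = of_int z \<Longrightarrow> - q < 2 * z \<and> 2 * z < q"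
  proof -
    fix r :: rat and z :: int assume "\<bar>r\<bar> < rat_of_int q / 2" "r = of_int z"
    then have "rat_of_int (2 * \<bar>z\<bar>) < rat_of_int q" by simp
    then have "2 * \<bar>z\<bar> < q" by (simp only: of_int_less_iff)
    then show "- q < 2 * z \<and> 2 * z < q" by linarith
  qed
  have zi_bnd: "\<And>t l. l < n \<Longrightarrow> - q < 2 * (zi t $ l) \<and> 2 * (zi t $ l) < q"
  proof -
    fix t l assume l: "l < n"
    have d: "l < dim_vec (zr t)" using l T_dim unfolding zr_def by simp
    have "\<bar>zr t $ l\<bar> < rat_of_int q / 2" using vn[OF d] bnd[of t] unfolding zr_def by linarith
    moreover have "zr t $ l = of_int (zi t $ l)" using zr_eq[of t] zi_dim[of t] l
      by (metis carrier_vecD index_map_vec(1))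
    ultimately show "- q < 2 * (zi t $ l) \<and> 2 * (zi t $ l) < q" by (rule small)
  qed
  have w_bnd: "\<And>t l. l < m \<Longrightarrow> - q < 2 * ((Hb *\<^sub>v zi t) $ l) \<and> 2 * ((Hb *\<^sub>v zi t) $ l) < q"
  proof -
    fix t l assume l: "l < m"
    have d: "l < dim_vec ((1 / (L * s1 * s2)) \<cdot>\<^sub>v u t)" using l H_dim unfolding u_def by simp
    have "\<bar>((1 / (L * s1 * s2)) \<cdot>\<^sub>v u t) $ l\<bar> < rat_of_int q / 2" using vn[OF d] bnd[of t] by linarith
    moreover have "((1 / (L * s1 * s2)) \<cdot>\<^sub>v u t) $ l = of_int ((Hb *\<^sub>v zi t) $ l)"
      using u_eq[of t] Hb_dim l by (metis carrier_matD(1) dim_mult_mat_vec index_map_vec(1))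
    ultimately show "- q < 2 * ((Hb *\<^sub>v zi t) $ l) \<and> 2 * ((Hb *\<^sub>v zi t) $ l) < q" by (rule small)
  qed
  have yt_eqv: "\<And>t. eqv N q (yt t) (lc N {..<p} (\<lambda>j. yb t $ j) (\<lambda>j. int j))"
    unfolding yt_def by (rule rsum_const_Xpow[OF N0])
  have Gt_eqv': "eqv N q Gt (lc N ({..<n} \<times> {..<p}) (\<lambda>(i,j). Gb $$ (i,j)) (\<lambda>(i,j). - int j + int (i * D)))"
    unfolding Gt_def by (rule Gt_eqv[OF N0 ND D0])
  have Ht_eqv': "eqv N q Ht (lc N ({..<m} \<times> {..<n}) (\<lambda>(i,j). Hb $$ (i,j)) (\<lambda>(i,j). - int (j * D) + int (i * E)))"
    unfolding Ht_def by (rule Ht_eqv[OF N0 ND D0 DE E0])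
  have inv: "\<And>t. \<forall>l<n. zt t (l * D) mod q = zi t $ l mod q"
  proof -
    fix t show "\<forall>l<n. zt t (l * D) mod q = zi t $ l mod q"
    proof (induction t)
      case 0
      show ?case
      proof (intro allI impI)
        fix l assume l: "l < n"
        have "l * D < N" using l ND D0 by simp
        have "zt 0 (l * D) mod q = lc N {..<n} (\<lambda>i. zini $ i) (\<lambda>i. int (i * D)) (l * D) mod q"
          using Pack_eqv[OF N0 ND D0, of q zini] \<open>l * D < N\<close> unfolding zt_0 eqv_def by blast
        also have "lc N {..<n} (\<lambda>i. zini $ i) (\<lambda>i. int (i * D)) (l * D) = zini $ l"
          by (rule lc_eval_D[OF ND D0 l])
        finally show "zt 0 (l * D) mod q = zi 0 $ l mod q" unfolding zi0 .
      qed
    next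
      case (Suc t)
      let ?k = "length Cs"
      let ?r = "block_start Cs"
      define fc where "fc i = map_vec (\<lambda>r. \<lfloor>r\<rfloor>) (col (Fbar - S_mat n) (?r i))" for i
      define w where "w i = rmul N q (Xpow N q (- int (?r i * N div n))) (zt t)" for i
      have rlt: "\<And>i. i < ?k \<Longrightarrow> ?r i < n"
      proof -
        fix i assume i: "i < ?k"
        have Cs: "Fbar = diag_block_mat Cs" "\<forall>C\<in>set Cs. 0 < dim_row C \<and> companion_mat C (dim_row C)"
          using rcf unfolding rcf_blocks_def by auto
        have "sum_list (map dim_row Cs) = n" using Fbc Cs(1) dim_diag_block_mat[of Cs] by simp
        then show "?r i < n" using block_start_lt_total[of Cs i] Cs(2) i by auto
      qed
      define S1 where "S1 k = (\<Sum>i<?k. w i 0 * lc N {..<n} (\<lambda>j. fc i $ j) (\<lambda>j. int (j * D) + 0) k)" for k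
      define S2 where "S2 = nm N (xmono N (- int (N div n))) (zt t)"
      define S3 where "S3 k = (\<Sum>x\<in>{..<n} \<times> {..<p}. \<Sum>y\<in>{..<p}. (case x of (i,j) \<Rightarrow> Gb $$ (i,j)) * yb t $ y *
            xmono N ((case x of (i,j) \<Rightarrow> - int j + int (i * D)) + int y) k)" for k
      have E1: "eqv N q (rsum N q (\<lambda>i. rmul N q (Ft i)
             (Slot N 1 (rmul N q (Xpow N q (- int (block_start Cs i * N div n))) (zt t))))
           {..<length Cs}) S1"
        unfolding S1_def
      proof (rule rsum_eqv)
        fix i assume "i \<in> {..<?k}"
        have Fe: "eqv N q (Ft i) (lc N {..<n} (\<lambda>j. fc i $ j) (\<lambda>j. int (j * D)))"
          unfolding Ft_def fc_def by (rule Pack_eqv[OF N0 ND D0])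
        show "eqv N q (rmul N q (Ft i) (Slot N 1 (rmul N q (Xpow N q (- int (block_start Cs i * N div n))) (zt t))))
             (\<lambda>k. w i 0 * lc N {..<n} (\<lambda>j. fc i $ j) (\<lambda>j. int (j * D) + 0) k)"
        proof (rule eqv_trans[OF rmul_eqv[OF Fe Slot1_eqv[OF N0]]], rule eqv_eqI)
          fix k assume k: "k < N"
          show "nm N (lc N {..<n} (\<lambda>j. fc i $ j) (\<lambda>j. int (j * D)))
                 (\<lambda>k. rmul N q (Xpow N q (- int (block_start Cs i * N div n))) (zt t) 0 * xmono N 0 k) k =
                w i 0 * lc N {..<n} (\<lambda>j. fc i $ j) (\<lambda>j. int (j * D) + 0) k"
            unfolding nm_smult_right nm_lc_mono[OF N0 k] w_def ..
        qed
      qed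
      have E2: "eqv N q (rmul N q (Xpow N q (- int (N div n))) (zt t)) S2"
        unfolding S2_def by (rule rmul_eqv[OF Xpow_eqv eqv_refl])
      have E3: "eqv N q (rmul N q Gt (yt t)) S3"
        unfolding S3_def by (rule rmul_lc_lc[OF N0 Gt_eqv' yt_eqv])
      have Ez: "eqv N q (zt (Suc t)) (\<lambda>k. S1 k + S2 k + S3 k)"
        unfolding zt_step by (rule radd_eqv[OF radd_eqv[OF E1 E2] E3])
      show ?case
      proof (intro allI impI)
        fix l assume l: "l < n"
        have lD: "l * D < N" using l ND D0 by simp
        have "zt (Suc t) (l * D) mod q = (S1 (l * D) + S2 (l * D) + S3 (l * D)) mod q"
          using Ez lD unfolding eqv_def by blast
        also have "S1 (l * D) = (\<Sum>i<?k. w i 0 * fc i $ l)"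
          unfolding S1_def using lc_eval_D[OF ND D0 l] by simp
        also have "S2 (l * D) = (if l + 1 < n then zt t ((l + 1) * D) else - zt t 0)"
          unfolding S2_def posD[of 1, simplified] by (rule X2[OF ND D0 l])
        also have "S3 (l * D) = (\<Sum>j<p. Gb $$ (l,j) * yb t $ j)"
          unfolding S3_def by (rule GY_eval[OF ND D0 l pD])
        finally have z1: "zt (Suc t) (l * D) mod q = ((\<Sum>i<?k. w i 0 * fc i $ l) +
            (if l + 1 < n then zt t ((l + 1) * D) else - zt t 0) + (\<Sum>j<p. Gb $$ (l,j) * yb t $ j)) mod q" .
        have wc: "w i 0 mod q = zi t $ ?r i mod q" if i: "i < ?k" for i
        proof -
          have "w i 0 mod q = nm N (Xpow N q (- int (?r i * N div n))) (zt t) 0 mod q"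
            unfolding w_def rmul_nm using N0 by (simp add: cmod_mod)
          also have "\<dots> = nm N (xmono N (- int (?r i * D))) (zt t) 0 mod q"
            unfolding posD by (rule nm_cong[OF Xpow_eqv eqv_refl])
          also have "nm N (xmono N (- int (?r i * D))) (zt t) 0 = zt t (?r i * D)"
            by (rule X1[OF ND D0 rlt[OF i]])
          also have "zt t (?r i * D) mod q = zi t $ ?r i mod q" using spec[OF Suc.IH, of "?r i"] rlt[OF i] by simp
          finally show ?thesis .
        qed
        have sc: "(if l + 1 < n then zt t ((l + 1) * D) else - zt t 0) mod q =
                  (if l + 1 < n then zi t $ (l + 1) else - zi t $ 0) mod q"
        proof (cases "l + 1 < n")
          case True
          have "zt t ((l + 1) * D) mod q = zi t $ (l + 1) mod q" using spec[OF Suc.IH, of "l + 1"] True by simp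
          then show ?thesis using True by simp
        next
          case False
          have "zt t 0 mod q = zi t $ 0 mod q" using spec[OF Suc.IH, of 0] n0 by simp
          then have "(- zt t 0) mod q = (- zi t $ 0) mod q" by (rule mod_minus_cong)
          then show ?thesis using False by simp
        qed
        have z2: "zt (Suc t) (l * D) mod q = ((\<Sum>i<?k. zi t $ ?r i * fc i $ l) +
            (if l + 1 < n then zi t $ (l + 1) else - zi t $ 0) + (\<Sum>j<p. Gb $$ (l,j) * yb t $ j)) mod q"
          unfolding z1
        proof (intro mod_add_cong refl sc)
          show "(\<Sum>i<?k. w i 0 * fc i $ l) mod q = (\<Sum>i<?k. zi t $ ?r i * fc i $ l) mod q"
            by (intro sum_mod_cong mod_mult_cong wc refl) simp
        qed
        have fcl: "rat_of_int (fc i $ l) = (Fbar - S_mat n) $$ (l, ?r i)" if i: "i < ?k" for i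
        proof -
          have Sc: "S_mat n \<in> carrier_mat n n" unfolding S_mat_def by simp
          have "(Fbar - S_mat n) $$ (l, ?r i) = Fbar $$ (l, ?r i) - S_mat n $$ (l, ?r i)"
            using Fbc Sc l rlt[OF i] by simp
          moreover have "S_mat n $$ (l, ?r i) \<in> \<int>" using S_mat_entry[OF l rlt[OF i]] by simp
          ultimately have "(Fbar - S_mat n) $$ (l, ?r i) \<in> \<int>" using Fbar_int[OF l rlt[OF i]] by simp
          moreover have "fc i $ l = \<lfloor>(Fbar - S_mat n) $$ (l, ?r i)\<rfloor>"
            unfolding fc_def using Fbc Sc l rlt[OF i] by simp
          ultimately show ?thesis using of_int_floor by simp
        qed
        have rowF: "(Fi *\<^sub>v zi t) $ l = (\<Sum>c<n. Fi $$ (l,c) * zi t $ c)"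
          using Fi_c zi_dim[of t] l by (simp add: scalar_prod_def lessThan_atLeast0 ac_simps)
        have "rat_of_int (\<Sum>c<n. Fi $$ (l,c) * zi t $ c) = (\<Sum>c<n. Fbar $$ (l,c) * rat_of_int (zi t $ c))"
          using FiF Fi_c l by (simp add: of_int_hom.hom_sum) (metis (no_types, lifting) carrier_matD index_map_mat lessThan_iff sum.cong)
        also have "\<dots> = (\<Sum>i<?k. (Fbar - S_mat n) $$ (l, ?r i) * rat_of_int (zi t $ ?r i))
            + (if l + 1 < n then rat_of_int (zi t $ (l + 1)) else - rat_of_int (zi t $ 0))"
          by (rule row_identity[OF rcf Fbc l])
        also have "\<dots> = rat_of_int ((\<Sum>i<?k. zi t $ ?r i * fc i $ l) + (if l + 1 < n then zi t $ (l + 1) else - zi t $ 0))"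
          using fcl by (simp add: ac_simps)
        finally have rid: "(\<Sum>c<n. Fi $$ (l,c) * zi t $ c) =
            (\<Sum>i<?k. zi t $ ?r i * fc i $ l) + (if l + 1 < n then zi t $ (l + 1) else - zi t $ 0)"
          by (simp only: of_int_eq_iff)
        have rowG: "(Gb *\<^sub>v yb t) $ l = (\<Sum>j<p. Gb $$ (l,j) * yb t $ j)"
          using Gb_dim yb_dim[of t] l by (simp add: scalar_prod_def lessThan_atLeast0 ac_simps)
        have "zi (Suc t) $ l = (Fi *\<^sub>v zi t) $ l + (Gb *\<^sub>v yb t) $ l"
          unfolding ziS using Fi_c Gb_dim l by simp
        then have "zi (Suc t) $ l = (\<Sum>i<?k. zi t $ ?r i * fc i $ l) +
            (if l + 1 < n then zi t $ (l + 1) else - zi t $ 0) + (\<Sum>j<p. Gb $$ (l,j) * yb t $ j)"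
          unfolding rowF rid rowG .
        then show "zt (Suc t) (l * D) mod q = zi (Suc t) $ l mod q" using z2 by simp
      qed
    qed
  qed
  show ?thesis
  proof
    fix t
    have SE: "eqv N q (Slot N n (zt t)) (lc N {..<n} (\<lambda>j. zt t (j * D)) (\<lambda>j. int (j * D)))"
      by (rule eqv_eqI) (rule Slotn_eq[OF ND D0])
    have Eu: "eqv N q (ut t) (\<lambda>k. \<Sum>x\<in>{..<m} \<times> {..<n}. \<Sum>y\<in>{..<n}. (case x of (i,j) \<Rightarrow> Hb $$ (i,j)) * zt t (y * D) *
            xmono N ((case x of (i,j) \<Rightarrow> - int (j * D) + int (i * E)) + int (y * D)) k)"
      unfolding ut_def by (rule rmul_lc_lc[OF N0 Ht_eqv' SE])
    have t0: "0 < \<tau>" using DE D0 by (cases \<tau>) auto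
    have NE: "\<And>i. i * N div (n * \<tau>) = i * E" using ND DE n0 t0 by (simp add: ac_simps)
    have U: "Unpack N n \<tau> m (ut t) = Hb *\<^sub>v zi t"
    proof (rule eq_vecI)
      show "dim_vec (Unpack N n \<tau> m (ut t)) = dim_vec (Hb *\<^sub>v zi t)" using Hb_dim unfolding Unpack_def by simp
    next
      fix l assume "l < dim_vec (Hb *\<^sub>v zi t)"
      then have l: "l < m" using Hb_dim by simp
      have lE: "l * E < N"
      proof -
        have "l * E < \<tau> * E" using l m_le E0 by simp
        also have "\<dots> \<le> n * (\<tau> * E)" using n0 by simp
        finally show ?thesis using ND DE by simp
      qed
      have "Unpack N n \<tau> m (ut t) $ l = ut t (l * E)" unfolding Unpack_def NE using l by simp
      also have "ut t (l * E) = cmod q (nm N Ht (Slot N n (zt t)) (l * E))" unfolding ut_def rmul_nm using lE by simp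
      finally have u1: "Unpack N n \<tau> m (ut t) $ l = cmod q (nm N Ht (Slot N n (zt t)) (l * E))" .
      have "ut t (l * E) mod q = (\<Sum>j<n. Hb $$ (l,j) * zt t (j * D)) mod q"
        using Eu lE HS_eval[OF ND DE E0 l m_le, of "\<lambda>i j. Hb $$ (i,j)" "\<lambda>y. zt t (y * D)"] unfolding eqv_def by simp
      also have "\<dots> = (\<Sum>j<n. Hb $$ (l,j) * zi t $ j) mod q"
        using inv[of t] by (intro sum_mod_cong mod_mult_cong refl) auto
      also have "(\<Sum>j<n. Hb $$ (l,j) * zi t $ j) = (Hb *\<^sub>v zi t) $ l"
        using Hb_dim zi_dim[of t] l by (simp add: scalar_prod_def lessThan_atLeast0 ac_simps)
      finally have u2: "ut t (l * E) mod q = (Hb *\<^sub>v zi t) $ l mod q" .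
      have u3: "Unpack N n \<tau> m (ut t) $ l = ut t (l * E)" unfolding Unpack_def NE using l by simp
      show "Unpack N n \<tau> m (ut t) $ l = (Hb *\<^sub>v zi t) $ l"
      proof (rule mod_eq_small[OF q0])
        show "Unpack N n \<tau> m (ut t) $ l mod q = (Hb *\<^sub>v zi t) $ l mod q" using u2 u3 by simp
        show "- q \<le> 2 * Unpack N n \<tau> m (ut t) $ l" "2 * Unpack N n \<tau> m (ut t) $ l < q"
          unfolding u1 using cmod_range[OF q0] by auto
        show "- q \<le> 2 * (Hb *\<^sub>v zi t) $ l" "2 * (Hb *\<^sub>v zi t) $ l < q" using w_bnd[OF l, of t] by auto
      qed
    qed
    have Lne: "L * s1 * s2 \<noteq> 0" using L_scale s1_scale s2_scale by simp
    have "u' t = (L * s1 * s2) \<cdot>\<^sub>v ((1 / (L * s1 * s2)) \<cdot>\<^sub>v u t)" unfolding u'_def U u_eq ..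
    also have "\<dots> = u t" using Lne by (simp add: smult_smult_assoc)
    finally show "u' t = u t" .
  qed
qed

end
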